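(* A finitely generated group has finitely many ends if and only if it has a Cayley graph admitting a Hamiltonian path.
   Context: A Cayley graph of $G$ means $\mathrm{Cay}(G;S)$ for a finite generating set $S$: vertex set $G$, with $g$ adjacent to $gs$ for $s\in S\cup S^{-1}$. A Hamiltonian path is a path (a map from an interval of $\mathbb{Z}$ to the vertex set, consecutive values adjacent) visiting every vertex exactly once. The number of ends of $G$ is the number of ends of any of its Cayley graphs, where the number of ends of a connected graph is the supremum over finite edge sets $A$ of the number of infinite components of the graph with $A$ removed (finite groups have $0$ ends). *)

theory Defs
  imports "HOL-Algebra.Generated_Groups"
begin

definition fin_gen_set :: "('a, 'b) monoid_scheme \<Rightarrow> 'a set \<Rightarrow> bool" where
  "fin_gen_set G S \<longleftrightarrow> finite S \<and> S \<subseteq> carrier G \<and> generate G S = carrier G"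

definition finitely_generated :: "('a, 'b) monoid_scheme \<Rightarrow> bool" where
  "finitely_generated G \<longleftrightarrow> (\<exists>S. fin_gen_set G S)"

definition cay_edges :: "('a, 'b) monoid_scheme \<Rightarrow> 'a set \<Rightarrow> 'a set set" where
  "cay_edges G S = {{g, h} | g h. g \<in> carrier G \<and> h \<in> carrier G \<and>
      (\<exists>s\<in>S. h = g \<otimes>\<^bsub>G\<^esub> s \<or> h = g \<otimes>\<^bsub>G\<^esub> inv\<^bsub>G\<^esub> s)}"

definition components :: "'a set \<Rightarrow> 'a set set \<Rightarrow> 'a set set" where
  "components V E = {{y. (\<lambda>u v. {u, v} \<in> E)\<^sup>*\<^sup>* x y} | x. x \<in> V}"

definition graph_finitely_many_ends :: "'a set \<Rightarrow> 'a set set \<Rightarrow> bool" where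
  "graph_finitely_many_ends V E \<longleftrightarrow> (\<exists>n::nat. \<forall>A. finite A \<longrightarrow>
     (let C = {X \<in> components V (E - A). infinite X} in finite C \<and> card C \<le> n))"

text \<open>The number of ends of a group is that of any of its Cayley graphs
  (independent of the finite generating set).\<close>
definition group_finitely_many_ends :: "('a, 'b) monoid_scheme \<Rightarrow> bool" where
  "group_finitely_many_ends G \<longleftrightarrow>
     (\<forall>S. fin_gen_set G S \<longrightarrow> graph_finitely_many_ends (carrier G) (cay_edges G S))"

definition int_interval :: "int set \<Rightarrow> bool" where
  "int_interval I \<longleftrightarrow> (\<forall>x y z. x \<in> I \<longrightarrow> z \<in> I \<longrightarrow> x \<le> y \<longrightarrow> y \<le> z \<longrightarrow> y \<in> I)"

definition cayley_ham_path :: "('a, 'b) monoid_scheme \<Rightarrow> 'a set \<Rightarrow> bool" where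
  "cayley_ham_path G S \<longleftrightarrow> (\<exists>I f. int_interval I \<and> bij_betw f I (carrier G) \<and>
     (\<forall>i. i \<in> I \<longrightarrow> i + 1 \<in> I \<longrightarrow> {f i, f (i + 1)} \<in> cay_edges G S))"

end

theory Submission
  imports Defs
begin


locale lfg =
  fixes V :: "'a set" and adj :: "'a \<Rightarrow> 'a \<Rightarrow> bool"
  assumes adjV: "adj a b \<Longrightarrow> a \<in> V \<and> b \<in> V"
    and asym: "adj a b \<Longrightarrow> adj b a"
    and lfin: "finite {b. adj a b}"
begin

definition conn :: "'a set \<Rightarrow> 'a \<Rightarrow> 'a \<Rightarrow> bool" where
  "conn W = (\<lambda>x y. adj x y \<and> x \<in> W \<and> y \<in> W)\<^sup>*\<^sup>*"
definition comp :: "'a set \<Rightarrow> 'a \<Rightarrow> 'a set" where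
  "comp W a = {b. conn W a b}"
definition connected_on :: "'a set \<Rightarrow> bool" where
  "connected_on W \<longleftrightarrow> (\<forall>a\<in>W. \<forall>b\<in>W. conn W a b)"
definition one_ended :: "'a set \<Rightarrow> bool" where
  "one_ended W \<longleftrightarrow> (\<forall>F a b. finite F \<longrightarrow> a \<in> W - F \<longrightarrow> b \<in> W - F \<longrightarrow>
     infinite (comp (W - F) a) \<longrightarrow> infinite (comp (W - F) b) \<longrightarrow> comp (W - F) a = comp (W - F) b)"
definition near :: "'a \<Rightarrow> 'a \<Rightarrow> bool" where
  "near a b \<longleftrightarrow> (\<exists>c d. (a = c \<or> adj a c) \<and> (c = d \<or> adj c d) \<and> (d = b \<or> adj d b))"
definition Nb :: "'a set \<Rightarrow> 'a set" where
  "Nb F = {x. \<exists>y\<in>F. adj y x}"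

lemma Nb_finite: "finite F \<Longrightarrow> finite (Nb F)"
proof -
  assume "finite F"
  have "Nb F = (\<Union>y\<in>F. {b. adj y b})" unfolding Nb_def by auto
  thus ?thesis using \<open>finite F\<close> lfin by auto
qed

lemma conn_refl[simp]: "conn W a a" unfolding conn_def by simp

lemma conn_step: "adj a b \<Longrightarrow> a \<in> W \<Longrightarrow> b \<in> W \<Longrightarrow> conn W a b"
  unfolding conn_def by (simp add: r_into_rtranclp)

lemma conn_trans: "conn W a b \<Longrightarrow> conn W b c \<Longrightarrow> conn W a c"
  unfolding conn_def by (rule rtranclp_trans)

lemma conn_sym: "conn W a b \<Longrightarrow> conn W b a"
  unfolding conn_def
proof (induction rule: rtranclp_induct)
  case base then show ?case by simp
next
  case (step y z)
  then show ?case by (metis (mono_tags, lifting) asym converse_rtranclp_into_rtranclp)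
qed

lemma conn_mono: "conn W a b \<Longrightarrow> W \<subseteq> W' \<Longrightarrow> conn W' a b"
  unfolding conn_def
proof (induction rule: rtranclp_induct)
  case base then show ?case by simp
next
  case (step y z)
  then show ?case by (metis (mono_tags, lifting) rtranclp.simps subset_iff)
qed

lemma conn_in: "conn W a b \<Longrightarrow> b = a \<or> b \<in> W"
  unfolding conn_def by (induction rule: rtranclp_induct) auto

lemma comp_sub: "a \<in> W \<Longrightarrow> comp W a \<subseteq> W"
  unfolding comp_def using conn_in by blast

lemma comp_self[simp]: "a \<in> comp W a" unfolding comp_def by simp

lemma comp_eq: "b \<in> comp W a \<Longrightarrow> comp W b = comp W a"
  unfolding comp_def using conn_sym conn_trans by blast

lemma comp_disj: "comp W a \<noteq> comp W b \<Longrightarrow> comp W a \<inter> comp W b = {}"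
  using comp_eq by blast

lemma crossing:
  assumes "conn W a b" "a \<in> C" "b \<notin> C"
  shows "\<exists>x y. x \<in> C \<and> y \<notin> C \<and> adj x y \<and> x \<in> W \<and> y \<in> W \<and> conn W a x"
  using assms unfolding conn_def
proof (induction rule: rtranclp_induct)
  case base then show ?case by simp
next
  case (step y z)
  show ?case
  proof (cases "y \<in> C")
    case True
    then show ?thesis using step by blast
  next
    case False
    then show ?thesis using step by blast
  qed
qed

lemma conn_comp: "conn W a b \<Longrightarrow> conn (comp W a) a b"
  unfolding conn_def
proof (induction rule: rtranclp_induct)
  case base then show ?case by simp
next
  case (step y z)
  have c1: "conn W a y" using step(1) unfolding conn_def .
  have c2: "conn W a z" using rtranclp.rtrancl_into_rtrancl[OF step(1) step(2)] unfolding conn_def .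
  have "y \<in> comp W a" "z \<in> comp W a" using c1 c2 unfolding comp_def by auto
  then show ?case using step(2,3) rtranclp.rtrancl_into_rtrancl[OF step(3)] by blast
qed

lemma connected_comp: "connected_on (comp W a)"
  unfolding connected_on_def
proof (intro ballI)
  fix x y assume "x \<in> comp W a" "y \<in> comp W a"
  then have "comp W x = comp W a" "comp W y = comp W a" using comp_eq by auto
  have "conn W x y" using \<open>comp W x = comp W a\<close> \<open>y \<in> comp W a\<close> unfolding comp_def by auto
  then have "conn (comp W x) x y" by (rule conn_comp)
  then show "conn (comp W a) x y" using \<open>comp W x = comp W a\<close> by simp
qed

lemma comp_connected: "connected_on W \<Longrightarrow> a \<in> W \<Longrightarrow> comp W a = W"
  using comp_sub unfolding connected_on_def comp_def by blast

lemma comp_mono: "W \<subseteq> W' \<Longrightarrow> comp W a \<subseteq> comp W' a"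
  unfolding comp_def using conn_mono by blast

lemma comp_avoid:
  assumes "a \<in> W" "comp W a \<inter> D = {}"
  shows "comp (W - D) a = comp W a"
proof
  show "comp (W - D) a \<subseteq> comp W a" by (rule comp_mono) auto
  show "comp W a \<subseteq> comp (W - D) a"
  proof
    fix b assume "b \<in> comp W a"
    then have "conn (comp W a) a b" using conn_comp unfolding comp_def by blast
    moreover have "comp W a \<subseteq> W - D" using assms comp_sub by blast
    ultimately show "b \<in> comp (W - D) a" unfolding comp_def using conn_mono by blast
  qed
qed

lemma comp_restrict:
  assumes "a \<in> comp W a0 - F" "a0 \<in> W"
  shows "comp (comp W a0 - F) a = comp (W - F) a"
proof
  have "comp W a0 \<subseteq> W" using assms comp_sub by blast
  then show "comp (comp W a0 - F) a \<subseteq> comp (W - F) a" by (rule comp_mono[OF Diff_mono]) auto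
next
  have K: "comp W a = comp W a0" using assms comp_eq by blast
  have aW: "a \<in> W - F" using assms comp_sub by blast
  show "comp (W - F) a \<subseteq> comp (comp W a0 - F) a"
  proof
    fix b assume "b \<in> comp (W - F) a"
    then have "conn (comp (W - F) a) a b" using conn_comp unfolding comp_def by blast
    moreover have "comp (W - F) a \<subseteq> comp W a0 - F"
      using comp_sub[OF aW] comp_mono[of "W - F" W a] K by blast
    ultimately show "b \<in> comp (comp W a0 - F) a" unfolding comp_def using conn_mono by blast
  qed
qed

lemma connected_union:
  assumes "connected_on A" "connected_on B" "A \<inter> B \<noteq> {}"
  shows "connected_on (A \<union> B)"
proof -
  obtain c where c: "c \<in> A" "c \<in> B" using assms by blast
  have h: "conn (A \<union> B) x c" if "x \<in> A \<union> B" for x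
  proof -
    from that show ?thesis
    proof
      assume "x \<in> A" then have "conn A x c" using assms c unfolding connected_on_def by blast
      then show ?thesis using conn_mono by blast
    next
      assume "x \<in> B" then have "conn B x c" using assms c unfolding connected_on_def by blast
      then show ?thesis using conn_mono by blast
    qed
  qed
  show ?thesis unfolding connected_on_def using h conn_sym conn_trans by blast
qed

lemma connected_single: "connected_on {a}"
  unfolding connected_on_def by simp

lemma path_set:
  assumes "conn W a b" "a \<in> W"
  shows "\<exists>P. finite P \<and> P \<subseteq> W \<and> a \<in> P \<and> b \<in> P \<and> connected_on P"
  using assms(1) unfolding conn_def
proof (induction rule: rtranclp_induct)
  case base then show ?case using assms(2) connected_single by (intro exI[of _ "{a}"]) auto
next
  case (step y z)
  then obtain P where P: "finite P" "P \<subseteq> W" "a \<in> P" "y \<in> P" "connected_on P" by blast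
  have "connected_on {y, z}" unfolding connected_on_def
    using step(2) asym conn_step by (auto)
  then have "connected_on (P \<union> {y, z})" using P connected_union by blast
  then show ?case using P step(2) by (intro exI[of _ "P \<union> {y,z}"]) auto
qed

lemma connected_hull:
  assumes "connected_on W" "y \<in> W" "finite T" "T \<subseteq> W"
  shows "\<exists>P. finite P \<and> P \<subseteq> W \<and> y \<in> P \<and> T \<subseteq> P \<and> connected_on P"
  using assms(3,4)
proof (induction rule: finite_induct)
  case empty then show ?case using assms(2) connected_single by (intro exI[of _ "{y}"]) auto
next
  case (insert t T)
  then obtain P where P: "finite P" "P \<subseteq> W" "y \<in> P" "T \<subseteq> P" "connected_on P" by blast
  have "conn W y t" using assms insert unfolding connected_on_def by blast
  then obtain Q where Q: "finite Q" "Q \<subseteq> W" "y \<in> Q" "t \<in> Q" "connected_on Q"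
    using path_set[OF \<open>conn W y t\<close> assms(2)] by blast
  have "connected_on (P \<union> Q)" using P Q connected_union by blast
  then show ?case using P Q by (intro exI[of _ "P \<union> Q"]) auto
qed

lemma comps_cover:
  assumes "connected_on K" "K \<inter> F \<noteq> {}" "b \<in> K - F"
  shows "\<exists>x\<in>K - F. x \<in> Nb F \<and> b \<in> comp (K - F) x"
proof -
  obtain f where f: "f \<in> K" "f \<in> F" using assms by blast
  have "conn K b f" using assms f unfolding connected_on_def by blast
  then obtain x y where xy: "x \<in> comp (K - F) b" "y \<notin> comp (K - F) b" "adj x y" "x \<in> K" "y \<in> K"
    using crossing[of K b f "comp (K - F) b"] comp_sub[of b "K - F"] f assms by auto
  have xKF: "x \<in> K - F" using xy comp_sub[of b "K - F"] assms by blast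
  have "y \<in> F"
  proof (rule ccontr)
    assume "y \<notin> F"
    then have "conn (K - F) x y" using xy xKF conn_step by auto
    then have "y \<in> comp (K - F) b" using xy(1) unfolding comp_def using conn_trans by blast
    then show False using xy by blast
  qed
  then have "x \<in> Nb F" unfolding Nb_def using xy asym by blast
  moreover have "b \<in> comp (K - F) x" using xy(1) comp_eq by (metis comp_self)
  ultimately show ?thesis using xKF by blast
qed

lemma comps_finite:
  assumes "connected_on K" "finite F"
  shows "finite {comp (K - F) a | a. a \<in> K - F}"
proof (cases "K \<inter> F = {}")
  case True
  then have "K - F = K" by blast
  then have "{comp (K - F) a | a. a \<in> K - F} \<subseteq> {K}" using comp_connected[OF assms(1)] by auto
  then show ?thesis using finite_subset by blast
next
  case False
  have "{comp (K - F) a | a. a \<in> K - F} \<subseteq> comp (K - F) ` (Nb F \<inter> (K - F))"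
  proof
    fix C assume "C \<in> {comp (K - F) a | a. a \<in> K - F}"
    then obtain a where a: "a \<in> K - F" "C = comp (K - F) a" by blast
    then obtain x where x: "x \<in> K - F" "x \<in> Nb F" "a \<in> comp (K - F) x"
      using comps_cover[OF assms(1) False] by blast
    then have "C = comp (K - F) x" using a comp_eq by blast
    then show "C \<in> comp (K - F) ` (Nb F \<inter> (K - F))" using x by blast
  qed
  then show ?thesis using Nb_finite[OF assms(2)] finite_subset by blast
qed

lemma konig:
  assumes "connected_on K" "infinite K" "finite F"
  shows "\<exists>a\<in>K - F. infinite (comp (K - F) a)"
proof (rule ccontr)
  assume "\<not> ?thesis"
  then have fin: "\<forall>C\<in>{comp (K - F) a | a. a \<in> K - F}. finite C" by blast
  have "K - F \<subseteq> \<Union>{comp (K - F) a | a. a \<in> K - F}" using comp_self by blast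
  then have "finite (K - F)" using comps_finite[OF assms(1,3)] fin
    by (meson finite_Union finite_subset)
  then show False using assms by simp
qed

end

context lfg begin

lemma nbr_exists:
  assumes "connected_on F" "u \<in> F" "F \<noteq> {u}"
  shows "\<exists>u'\<in>F. u' \<noteq> u \<and> adj u u'"
proof -
  obtain a where a: "a \<in> F" "a \<noteq> u" using assms by blast
  have "conn F u a" using assms a unfolding connected_on_def by blast
  then obtain x y where "x \<in> {u}" "y \<notin> {u}" "adj x y" "y \<in> F"
    using crossing[of F u a "{u}"] a by auto
  then show ?thesis by blast
qed

lemma ham3:
  assumes "finite F" "connected_on F" "u \<in> F" "v \<in> F" "u = v \<Longrightarrow> F = {u}"
  shows "\<exists>xs. distinct xs \<and> set xs = F \<and> hd xs = u \<and> last xs = v \<and> successively near xs"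
  using assms
proof (induction "card F" arbitrary: F u v rule: less_induct)
  case less
  show ?case
  proof (cases "F = {u}")
    case True
    then have "v = u" using less by auto
    then show ?thesis using True by (intro exI[of _ "[u]"]) auto
  next
    case False
    then have uv: "u \<noteq> v" using less by blast
    define F2 where "F2 = comp (F - {u}) v"
    define F1 where "F1 = F - F2"
    have vF2: "v \<in> F2" unfolding F2_def by simp
    have vFu: "v \<in> F - {u}" using less.prems(4) uv by blast
    have F2sub: "F2 \<subseteq> F - {u}" unfolding F2_def using comp_sub[OF vFu] .
    have cF2: "connected_on F2" unfolding F2_def by (rule connected_comp)
    have uF1: "u \<in> F1" using F2sub less.prems(3) unfolding F1_def by blast
    have finF1: "finite F1" "finite F2" using less.prems(1) F2sub unfolding F1_def by (auto intro: finite_subset)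
    have "F1 \<subset> F" using vF2 less.prems(4) unfolding F1_def by blast
    then have cardF1: "card F1 < card F" using less.prems(1) psubset_card_mono by blast
    have "F2 \<subset> F" using F2sub less.prems(3) by blast
    then have cardF2: "card F2 < card F" using less.prems(1) psubset_card_mono by blast
    have "conn F v u" using less unfolding connected_on_def by blast
    then obtain x y where xy: "x \<in> F2" "y \<notin> F2" "adj x y" "y \<in> F" "x \<in> F"
      using crossing[of F v u F2] vF2 F2sub by auto
    have "y = u"
    proof (rule ccontr)
      assume "y \<noteq> u"
      then have "conn (F - {u}) x y" using xy F2sub by (intro conn_step) auto
      moreover have "conn (F - {u}) v x" using xy(1) unfolding F2_def comp_def by simp
      ultimately have "y \<in> F2" unfolding F2_def comp_def using conn_trans by blast
      then show False using xy by blast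
    qed
    then have w: "x \<in> F2" "adj u x" using xy asym by auto
    have cu: "conn F1 a u" if "a \<in> F1" for a
    proof (cases "a = u")
      case True then show ?thesis by simp
    next
      case False
      define Ca where "Ca = comp (F - {u}) a"
      have aF: "a \<in> F - {u}" "a \<notin> F2" using that False unfolding F1_def by auto
      have "a \<in> F" using that unfolding F1_def by blast
      then have "conn F a u" using less.prems(2,3) unfolding connected_on_def by blast
      have uCa: "u \<notin> Ca" using comp_sub[OF aF(1)] unfolding Ca_def by blast
      have aCa: "a \<in> Ca" unfolding Ca_def by simp
      have "\<exists>x y. x \<in> Ca \<and> y \<notin> Ca \<and> adj x y \<and> x \<in> F \<and> y \<in> F \<and> conn F a x"
        by (rule crossing[OF \<open>conn F a u\<close> aCa uCa])
      then obtain x' y' where xy': "x' \<in> Ca" "y' \<notin> Ca" "adj x' y'" "y' \<in> F" by blast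
      have "y' = u"
      proof (rule ccontr)
        assume "y' \<noteq> u"
        moreover have "x' \<in> F - {u}" using xy'(1) comp_sub[OF aF(1)] unfolding Ca_def by blast
        ultimately have "conn (F - {u}) x' y'" using xy'(3,4) by (intro conn_step) auto
        moreover have "conn (F - {u}) a x'" using xy'(1) unfolding Ca_def comp_def by simp
        ultimately have "y' \<in> Ca" unfolding Ca_def comp_def using conn_trans by blast
        then show False using xy' by blast
      qed
      have CaF1: "Ca \<subseteq> F1"
      proof -
        have "Ca \<noteq> F2" using aF unfolding Ca_def by auto
        then have "Ca \<inter> F2 = {}" unfolding Ca_def F2_def by (rule comp_disj)
        moreover have "Ca \<subseteq> F" using comp_sub[OF aF(1)] unfolding Ca_def by blast
        ultimately show ?thesis unfolding F1_def by blast
      qed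
      have "conn Ca a x'" using xy'(1) conn_comp unfolding Ca_def comp_def by blast
      then have "conn F1 a x'" using CaF1 conn_mono by blast
      moreover have "conn F1 x' u" using xy' \<open>y' = u\<close> CaF1 uF1 by (intro conn_step) auto
      ultimately show ?thesis by (rule conn_trans)
    qed
    have cF1: "connected_on F1" unfolding connected_on_def
      by (intro ballI conn_trans[OF cu conn_sym[OF cu]])
    have P1: "\<exists>xs1. xs1 \<noteq> [] \<and> distinct xs1 \<and> set xs1 = F1 \<and> hd xs1 = u \<and> successively near xs1
                 \<and> (last xs1 = u \<or> adj (last xs1) u)"
    proof (cases "F1 = {u}")
      case True then show ?thesis by (intro exI[of _ "[u]"]) auto
    next
      case False
      then obtain u' where u': "u' \<in> F1" "u' \<noteq> u" "adj u u'" using nbr_exists[OF cF1 uF1] by blast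
      then obtain xs1 where "distinct xs1 \<and> set xs1 = F1 \<and> hd xs1 = u \<and> last xs1 = u' \<and> successively near xs1"
        using less.hyps[OF cardF1 finF1(1) cF1 uF1 u'(1)] by blast
      then show ?thesis using u' asym by (intro exI[of _ xs1]) auto
    qed
    have P2: "\<exists>xs2 t c. xs2 \<noteq> [] \<and> distinct xs2 \<and> set xs2 = F2 \<and> hd xs2 = t \<and> last xs2 = v
              \<and> successively near xs2 \<and> adj u c \<and> (c = t \<or> adj c t)"
    proof (cases "x = v")
      case False
      then obtain xs2 where "distinct xs2 \<and> set xs2 = F2 \<and> hd xs2 = x \<and> last xs2 = v \<and> successively near xs2"
        using less.hyps[OF cardF2 finF1(2) cF2 w(1) vF2] by blast
      then show ?thesis using w by (intro exI[of _ xs2] exI[of _ x]) auto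
    next
      case True
      show ?thesis
      proof (cases "F2 = {v}")
        case True
        then show ?thesis using w \<open>x = v\<close> by (intro exI[of _ "[v]"] exI[of _ v]) auto
      next
        case False
        then obtain w2 where w2: "w2 \<in> F2" "w2 \<noteq> v" "adj v w2" using nbr_exists[OF cF2 vF2] by blast
        then obtain xs2 where "distinct xs2 \<and> set xs2 = F2 \<and> hd xs2 = w2 \<and> last xs2 = v \<and> successively near xs2"
          using less.hyps[OF cardF2 finF1(2) cF2 w2(1) vF2] by blast
        then show ?thesis using w w2 \<open>x = v\<close> by (intro exI[of _ xs2] exI[of _ w2] exI[of _ v]) auto
      qed
    qed
    obtain xs1 where X1: "xs1 \<noteq> []" "distinct xs1" "set xs1 = F1" "hd xs1 = u" "successively near xs1"
       "last xs1 = u \<or> adj (last xs1) u" using P1 by blast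
    obtain xs2 t c where X2: "xs2 \<noteq> []" "distinct xs2" "set xs2 = F2" "hd xs2 = t" "last xs2 = v"
       "successively near xs2" "adj u c" "c = t \<or> adj c t" using P2 by blast
    have nr: "near (last xs1) (hd xs2)" unfolding near_def using X1(6) X2(4,7,8) by blast
    have "F1 \<inter> F2 = {}" "F1 \<union> F2 = F" using F2sub unfolding F1_def by auto
    note D = this
    show ?thesis
    proof (intro exI[of _ "xs1 @ xs2"] conjI)
      show "distinct (xs1 @ xs2)" using X1(2,3) X2(2,3) D(1) by simp
      show "set (xs1 @ xs2) = F" using X1(3) X2(3) D(2) by simp
      show "hd (xs1 @ xs2) = u" using X1(1,4) by simp
      show "last (xs1 @ xs2) = v" using X2(1,5) by simp
      show "successively near (xs1 @ xs2)" using X1(5) X2(6) nr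
        by (simp only: successively_append_iff) blast
    qed
  qed
qed

end

context lfg begin

primrec Bl :: "'a \<Rightarrow> nat \<Rightarrow> 'a set" where
  "Bl y 0 = {y}"
| "Bl y (Suc n) = Bl y n \<union> Nb (Bl y n)"

lemma Bl_finite: "finite (Bl y n)"
  by (induction n) (auto intro: Nb_finite)

lemma Bl_mono: "m \<le> n \<Longrightarrow> Bl y m \<subseteq> Bl y n"
proof (induction n)
  case 0 then show ?case by simp
next
  case (Suc n) then show ?case by (cases "m = Suc n") auto
qed

lemma Bl_cover: "adj\<^sup>*\<^sup>* y b \<Longrightarrow> \<exists>n. b \<in> Bl y n"
proof (induction rule: rtranclp_induct)
  case base then show ?case by (intro exI[of _ 0]) simp
next
  case (step b c)
  then obtain n where "b \<in> Bl y n" by blast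
  then have "c \<in> Nb (Bl y n)" using step(2) unfolding Nb_def by blast
  then have "c \<in> Bl y (Suc n)" by simp
  then show ?case by blast
qed

lemma conn_adj: "conn W a b \<Longrightarrow> adj\<^sup>*\<^sup>* a b"
  unfolding conn_def by (induction rule: rtranclp_induct) (auto intro: rtranclp.rtrancl_into_rtrancl)

lemma one_ended_diff: "one_ended W \<Longrightarrow> finite U \<Longrightarrow> one_ended (W - U)"
  unfolding one_ended_def
proof (intro allI impI)
  fix F a b
  assume oe: "\<forall>F a b. finite F \<longrightarrow> a \<in> W - F \<longrightarrow> b \<in> W - F \<longrightarrow> infinite (comp (W - F) a) \<longrightarrow>
      infinite (comp (W - F) b) \<longrightarrow> comp (W - F) a = comp (W - F) b"
    and U: "finite U" and F: "finite F" and a: "a \<in> W - U - F" and b: "b \<in> W - U - F"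
    and ia: "infinite (comp (W - U - F) a)" and ib: "infinite (comp (W - U - F) b)"
  have e: "W - U - F = W - (U \<union> F)" by blast
  show "comp (W - U - F) a = comp (W - U - F) b"
    using oe[rule_format, of "U \<union> F" a b] U F a b ia ib unfolding e by blast
qed

lemma stage:
  assumes cW: "connected_on W1" and iW: "infinite W1" and oe: "one_ended W1"
    and yn: "yn \<in> W1" and fT: "finite T"
  shows "\<exists>xs y'. xs \<noteq> [] \<and> distinct xs \<and> set xs \<subseteq> W1 \<and> T \<inter> W1 \<subseteq> set xs \<and> hd xs = yn
    \<and> successively near xs \<and> near (last xs) y' \<and> y' \<in> W1 - set xs
    \<and> connected_on (W1 - set xs) \<and> infinite (W1 - set xs)"
proof -
  obtain F0 where F0: "finite F0" "F0 \<subseteq> W1" "yn \<in> F0" "T \<inter> W1 \<subseteq> F0" "connected_on F0"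
    using connected_hull[OF cW yn, of "T \<inter> W1"] fT by blast
  obtain a where a: "a \<in> W1 - F0" "infinite (comp (W1 - F0) a)"
    using konig[OF cW iW F0(1)] by blast
  define C where "C = comp (W1 - F0) a"
  define F where "F = W1 - C"
  have CW: "C \<subseteq> W1 - F0" unfolding C_def using comp_sub[OF a(1)] .
  have F0F: "F0 \<subseteq> F" using CW F0(2) unfolding F_def by blast
  have other: "comp (W1 - F0) x \<subseteq> F" "finite (comp (W1 - F0) x)" if "x \<in> F - F0" for x
  proof -
    have xW: "x \<in> W1 - F0" using that unfolding F_def by blast
    have "comp (W1 - F0) x \<noteq> C" using that comp_self[of x "W1 - F0"] unfolding F_def by blast
    then have dis: "comp (W1 - F0) x \<inter> C = {}" unfolding C_def by (rule comp_disj)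
    then show "comp (W1 - F0) x \<subseteq> F" using comp_sub[OF xW] unfolding F_def by blast
    show "finite (comp (W1 - F0) x)"
    proof (rule ccontr)
      assume "infinite (comp (W1 - F0) x)"
      then have "comp (W1 - F0) x = C"
        using oe F0(1) xW a unfolding one_ended_def C_def by blast
      then show False using \<open>comp (W1 - F0) x \<noteq> C\<close> by blast
    qed
  qed
  have finF: "finite F"
  proof -
    have "F - F0 \<subseteq> \<Union>{D \<in> {comp (W1 - F0) b | b. b \<in> W1 - F0}. finite D}"
    proof
      fix x assume x: "x \<in> F - F0"
      then have "x \<in> W1 - F0" unfolding F_def by blast
      then show "x \<in> \<Union>{D \<in> {comp (W1 - F0) b | b. b \<in> W1 - F0}. finite D}"
        using other(2)[OF x] comp_self[of x "W1 - F0"] by blast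
    qed
    moreover have "finite (\<Union>{D \<in> {comp (W1 - F0) b | b. b \<in> W1 - F0}. finite D})"
      using comps_finite[OF cW F0(1)] by (intro finite_Union) auto
    ultimately have "finite (F - F0)" by (rule finite_subset)
    then show ?thesis using F0(1) by (metis finite_Diff2)
  qed
  have cF: "connected_on F"
  proof -
    have tc: "conn F b yn" if b: "b \<in> F" for b
    proof (cases "b \<in> F0")
      case True
      then have "conn F0 b yn" using F0 unfolding connected_on_def by blast
      then show ?thesis using F0F conn_mono by blast
    next
      case False
      define D where "D = comp (W1 - F0) b"
      have bD: "b \<in> D" unfolding D_def by simp
      have DF: "D \<subseteq> F" unfolding D_def using other(1) b False by blast
      have ynD: "yn \<notin> D" using comp_sub[of b "W1 - F0"] b False F0(3) unfolding D_def F_def by blast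
      have bW: "b \<in> W1" using b unfolding F_def by blast
      have "conn W1 b yn" using cW bW yn unfolding connected_on_def by blast
      then have "\<exists>x y. x \<in> D \<and> y \<notin> D \<and> adj x y \<and> x \<in> W1 \<and> y \<in> W1 \<and> conn W1 b x"
        by (rule crossing[OF _ bD ynD])
      then obtain x y where xy: "x \<in> D" "y \<notin> D" "adj x y" "y \<in> W1" by blast
      have yF0: "y \<in> F0"
      proof (rule ccontr)
        assume "y \<notin> F0"
        have xW: "x \<in> W1 - F0" using xy(1) comp_sub[of b "W1 - F0"] b False unfolding D_def F_def by blast
        have "conn (W1 - F0) x y" using xW xy(3,4) \<open>y \<notin> F0\<close> by (intro conn_step) auto
        moreover have "conn (W1 - F0) b x" using xy(1) unfolding D_def comp_def by simp
        ultimately have "y \<in> D" unfolding D_def comp_def using conn_trans by blast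
        then show False using xy(2) by blast
      qed
      have "conn D b x" using xy(1) conn_comp unfolding D_def comp_def by blast
      then have c1: "conn F b x" using DF conn_mono by blast
      have c2: "conn F x y" using xy(1,3) DF yF0 F0F by (intro conn_step) auto
      have "conn F0 y yn" using F0 yF0 unfolding connected_on_def by blast
      then have c3: "conn F y yn" using F0F conn_mono by blast
      show ?thesis using conn_trans[OF c1 conn_trans[OF c2 c3]] .
    qed
    show ?thesis unfolding connected_on_def by (intro ballI conn_trans[OF tc conn_sym[OF tc]])
  qed
  have ynF: "yn \<in> F" using F0F F0(3) by blast
  have aC: "a \<in> C" "a \<notin> F" unfolding C_def F_def by auto
  have "conn W1 yn a" using cW yn a(1) unfolding connected_on_def by blast
  then have "\<exists>x y. x \<in> F \<and> y \<notin> F \<and> adj x y \<and> x \<in> W1 \<and> y \<in> W1 \<and> conn W1 yn x"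
    by (rule crossing[OF _ ynF aC(2)])
  then obtain z y' where zy: "z \<in> F" "y' \<notin> F" "adj z y'" "y' \<in> W1" by blast
  have y'C: "y' \<in> C" using zy unfolding F_def by blast
  have HP: "\<exists>xs. distinct xs \<and> set xs = F \<and> hd xs = yn \<and> near (last xs) y' \<and> successively near xs"
  proof (cases "z = yn")
    case False
    then obtain xs where "distinct xs \<and> set xs = F \<and> hd xs = yn \<and> last xs = z \<and> successively near xs"
      using ham3[OF finF cF ynF zy(1)] by metis
    moreover have "near z y'" unfolding near_def using zy(3) by blast
    ultimately show ?thesis by metis
  next
    case True
    show ?thesis
    proof (cases "F = {yn}")
      case True
      then show ?thesis using zy(3) \<open>z = yn\<close> unfolding near_def by (intro exI[of _ "[yn]"]) auto
    next
      case False
      then obtain u' where u': "u' \<in> F" "u' \<noteq> yn" "adj yn u'" using nbr_exists[OF cF ynF] by blast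
      then obtain xs where "distinct xs \<and> set xs = F \<and> hd xs = yn \<and> last xs = u' \<and> successively near xs"
        using ham3[OF finF cF ynF u'(1)] by metis
      moreover have "near u' y'" unfolding near_def using zy(3) u'(3) asym \<open>z = yn\<close> by blast
      ultimately show ?thesis by metis
    qed
  qed
  then obtain xs where xs: "distinct xs" "set xs = F" "hd xs = yn" "near (last xs) y'" "successively near xs"
    by blast
  have rest: "W1 - set xs = C" using xs(2) CW unfolding F_def by blast
  show ?thesis
  proof (intro exI[of _ xs] exI[of _ y'] conjI)
    show "xs \<noteq> []" using xs(2) ynF by auto
    show "set xs \<subseteq> W1" using xs(2) unfolding F_def by blast
    show "T \<inter> W1 \<subseteq> set xs" using xs(2) F0(4) F0F by blast
    show "y' \<in> W1 - set xs" using rest y'C by blast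
    show "connected_on (W1 - set xs)" unfolding rest C_def by (rule connected_comp)
    show "infinite (W1 - set xs)" unfolding rest C_def by (rule a(2))
  qed (use xs in auto)
qed

end

context lfg begin

lemma ray:
  assumes cW: "connected_on W" and iW: "infinite W" and oe: "one_ended W" and y: "y \<in> W"
  shows "\<exists>r. bij_betw r UNIV W \<and> r 0 = y \<and> (\<forall>i. near (r i) (r (Suc i)))"
proof -
  define Inv where "Inv = (\<lambda>n p yn. distinct p \<and> set p \<subseteq> W \<and> yn \<in> W - set p \<and> connected_on (W - set p)
     \<and> infinite (W - set p) \<and> successively near (p @ [yn]) \<and> hd (p @ [yn]) = y
     \<and> (\<forall>k<n. Bl y k \<inter> W \<subseteq> set p) \<and> n \<le> length p)"
  have stepI: "\<exists>q y'. q \<noteq> [] \<and> Inv (Suc n) (p @ q) y'" if I: "Inv n p yn" for n p yn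
  proof -
    have I1: "distinct p" "set p \<subseteq> W" "yn \<in> W - set p" "connected_on (W - set p)"
      "infinite (W - set p)" "successively near (p @ [yn])" "hd (p @ [yn]) = y"
      "\<forall>k<n. Bl y k \<inter> W \<subseteq> set p" "n \<le> length p" using I unfolding Inv_def by auto
    obtain xs y' where X: "xs \<noteq> []" "distinct xs" "set xs \<subseteq> W - set p" "Bl y n \<inter> (W - set p) \<subseteq> set xs"
      "hd xs = yn" "successively near xs" "near (last xs) y'" "y' \<in> (W - set p) - set xs"
      "connected_on ((W - set p) - set xs)" "infinite ((W - set p) - set xs)"
      using stage[OF I1(4) I1(5) one_ended_diff[OF oe finite_set] I1(3) Bl_finite[of y n]] by blast
    have eq: "W - set (p @ xs) = (W - set p) - set xs" by auto
    have sp: "successively near p" "p = [] \<or> near (last p) yn"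
      using I1(6) by (simp_all only: successively_append_iff) auto
    have sx: "successively near (xs @ [y'])" using X(6,7) by (simp only: successively_append_iff) auto
    have s: "successively near ((p @ xs) @ [y'])"
    proof -
      have "(p @ xs) @ [y'] = p @ (xs @ [y'])" by simp
      moreover have "successively near (p @ (xs @ [y']))"
        using sp sx X(1,5) by (simp only: successively_append_iff) auto
      ultimately show ?thesis by simp
    qed
    have h: "hd ((p @ xs) @ [y']) = y"
    proof (cases p)
      case Nil then show ?thesis using I1(7) X(1,5) by simp
    next
      case (Cons a l) then show ?thesis using I1(7) by simp
    qed
    have cov: "\<forall>k<Suc n. Bl y k \<inter> W \<subseteq> set (p @ xs)"
    proof (intro allI impI)
      fix k assume "k < Suc n"
      then consider "k < n" | "k = n" by linarith
      then show "Bl y k \<inter> W \<subseteq> set (p @ xs)"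
      proof cases
        case 1 then show ?thesis using I1(8) by auto
      next
        case 2 then show ?thesis using X(4) by auto
      qed
    qed
    have "Inv (Suc n) (p @ xs) y'" unfolding Inv_def
    proof (intro conjI)
      show "distinct (p @ xs)" using I1(1) X(2,3) by auto
      show "set (p @ xs) \<subseteq> W" using I1(2) X(3) by auto
      show "y' \<in> W - set (p @ xs)" unfolding eq using X(8) .
      show "connected_on (W - set (p @ xs))" unfolding eq using X(9) .
      show "infinite (W - set (p @ xs))" unfolding eq using X(10) .
      show "Suc n \<le> length (p @ xs)" using I1(9) X(1) by (cases xs) auto
    qed (use s h cov in auto)
    then show ?thesis using X(1) by blast
  qed
  define nxt where "nxt = (\<lambda>n (s::'a list \<times> 'a). SOME s'. (\<exists>q. fst s' = fst s @ q \<and> q \<noteq> []) \<and> Inv (Suc n) (fst s') (snd s'))"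
  define st where "st = (\<lambda>n. rec_nat ([], y) nxt n)"
  have st0: "st 0 = ([], y)" unfolding st_def by simp
  have stS: "st (Suc n) = nxt n (st n)" for n unfolding st_def by simp
  have stepS: "(\<exists>q. fst (st (Suc n)) = fst (st n) @ q \<and> q \<noteq> []) \<and> Inv (Suc n) (fst (st (Suc n))) (snd (st (Suc n)))"
    if H: "Inv n (fst (st n)) (snd (st n))" for n
  proof -
    obtain q y' where "q \<noteq> []" "Inv (Suc n) (fst (st n) @ q) y'" using stepI[OF H] by blast
    then have ex: "\<exists>s'. (\<exists>q. fst s' = fst (st n) @ q \<and> q \<noteq> []) \<and> Inv (Suc n) (fst s') (snd s')"
      by (intro exI[of _ "(fst (st n) @ q, y')"]) auto
    show ?thesis unfolding stS nxt_def using someI_ex[OF ex] .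
  qed
  have inv: "Inv n (fst (st n)) (snd (st n))" for n
  proof (induction n)
    case 0
    show ?case unfolding st0 Inv_def using y cW iW by simp
  next
    case (Suc n) then show ?case using stepS by blast
  qed
  define P where "P n = fst (st n)" for n
  have ext: "\<exists>q. P (Suc n) = P n @ q" for n using stepS[OF inv] unfolding P_def by blast
  have pre: "\<exists>q. P m = P n @ q" if "n \<le> m" for n m
    using that
  proof (induction m rule: dec_induct)
    case base then show ?case by simp
  next
    case (step m)
    then obtain q where "P m = P n @ q" by blast
    moreover obtain q' where "P (Suc m) = P m @ q'" using ext by blast
    ultimately show ?case by auto
  qed
  have stab: "P m ! i = P n ! i" if H: "i < length (P n)" "n \<le> m" for i n m
  proof -
    obtain q where "P m = P n @ q" using pre[OF H(2)] by blast
    then show ?thesis using H(1) by (simp add: nth_append)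
  qed
  have PI: "distinct (P n)" "set (P n) \<subseteq> W" "successively near (P n @ [snd (st n)])"
    "hd (P n @ [snd (st n)]) = y" "\<forall>k<n. Bl y k \<inter> W \<subseteq> set (P n)" "n \<le> length (P n)" for n
    using inv[of n] unfolding Inv_def P_def by auto
  define r where "r i = P (Suc i) ! i" for i
  have rP: "r i = P n ! i" if H: "i < length (P n)" for i n
  proof -
    define M where "M = max n (Suc i)"
    have "Suc i \<le> length (P (Suc i))" using PI(6) .
    then have "P M ! i = P (Suc i) ! i" using stab[of i "Suc i" M] unfolding M_def by simp
    moreover have "P M ! i = P n ! i" using stab[OF H, of M] unfolding M_def by simp
    ultimately show ?thesis unfolding r_def by simp
  qed
  have r0: "r 0 = y"
  proof -
    have "1 \<le> length (P 1)" using PI(6)[of 1] .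
    then have "P 1 \<noteq> []" by auto
    then have "hd (P 1) = y" using PI(4)[of 1] by simp
    then show ?thesis unfolding r_def using \<open>P 1 \<noteq> []\<close> by (simp add: hd_conv_nth)
  qed
  have rnear: "near (r i) (r (Suc i))" for i
  proof -
    define N where "N = Suc (Suc i)"
    have len: "Suc i < length (P N)" using PI(6)[of N] unfolding N_def by simp
    have "successively near (P N)" using PI(3)[of N] by (simp only: successively_append_iff)
    then have "near (P N ! i) (P N ! Suc i)" using len by (rule successively_nth)
    then show ?thesis using rP[of i N] rP[of "Suc i" N] len by simp
  qed
  have inj: "inj r"
  proof (rule injI)
    fix i j assume e: "r i = r j"
    define N where "N = Suc (max i j)"
    have len: "i < length (P N)" "j < length (P N)" using PI(6)[of N] unfolding N_def by auto
    then have "P N ! i = P N ! j" using e rP by simp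
    then show "i = j" using PI(1)[of N] len nth_eq_iff_index_eq by blast
  qed
  have img: "range r = W"
  proof
    show "range r \<subseteq> W"
    proof
      fix w assume "w \<in> range r"
      then obtain i where "w = r i" by blast
      moreover have "i < length (P (Suc i))" using PI(6)[of "Suc i"] by simp
      ultimately show "w \<in> W" using PI(2)[of "Suc i"] unfolding r_def by (meson nth_mem subsetD)
    qed
    show "W \<subseteq> range r"
    proof
      fix w assume w: "w \<in> W"
      then have "conn W y w" using cW y unfolding connected_on_def by blast
      then obtain k where "w \<in> Bl y k" using Bl_cover conn_adj by blast
      then have "w \<in> set (P (Suc k))" using PI(5)[of "Suc k"] w by blast
      then obtain i where "i < length (P (Suc k))" "P (Suc k) ! i = w" by (meson in_set_conv_nth)
      then have "r i = w" using rP by simp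
      then show "w \<in> range r" by blast
    qed
  qed
  show ?thesis using inj img r0 rnear unfolding bij_betw_def by blast
qed

end

context lfg begin

definition infcomps :: "'a set \<Rightarrow> 'a set set" where
  "infcomps F = {comp (V - F) a | a. a \<in> V - F \<and> infinite (comp (V - F) a)}"

lemma infcomp_mem: "z \<in> V - F \<Longrightarrow> infinite (comp (V - F) z) \<Longrightarrow> comp (V - F) z \<in> infcomps F"
  unfolding infcomps_def by blast

lemma three_card: "finite S \<Longrightarrow> x \<in> S \<Longrightarrow> y \<in> S \<Longrightarrow> z \<in> S \<Longrightarrow> x \<noteq> y \<Longrightarrow> x \<noteq> z \<Longrightarrow> y \<noteq> z \<Longrightarrow> 3 \<le> card S"
proof -
  assume a: "finite S" "x \<in> S" "y \<in> S" "z \<in> S" "x \<noteq> y" "x \<noteq> z" "y \<noteq> z"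
  then have "card {x, y, z} \<le> card S" by (intro card_mono) auto
  moreover have "card {x, y, z} = 3" using a by simp
  ultimately show ?thesis by simp
qed

lemma attach:
  assumes "connected_on W" "F \<subseteq> W" "f \<in> F" "b \<in> W - F"
  shows "\<exists>x y. x \<in> comp (W - F) b \<and> y \<in> F \<and> adj x y"
proof -
  define C where "C = comp (W - F) b"
  have CW: "C \<subseteq> W - F" unfolding C_def using comp_sub[OF assms(4)] .
  have bC: "b \<in> C" unfolding C_def by simp
  have fC: "f \<notin> C" using CW assms(3) by blast
  have "conn W b f" using assms unfolding connected_on_def by blast
  then have "\<exists>x y. x \<in> C \<and> y \<notin> C \<and> adj x y \<and> x \<in> W \<and> y \<in> W \<and> conn W b x"
    by (rule crossing[OF _ bC fC])
  then obtain x y where xy: "x \<in> C" "y \<notin> C" "adj x y" "y \<in> W" by blast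
  have "y \<in> F"
  proof (rule ccontr)
    assume "y \<notin> F"
    then have "conn (W - F) x y" using xy CW by (intro conn_step) auto
    moreover have "conn (W - F) b x" using xy(1) unfolding C_def comp_def by simp
    ultimately have "y \<in> C" unfolding C_def comp_def using conn_trans by blast
    then show False using xy(2) by blast
  qed
  then show ?thesis using xy unfolding C_def by blast
qed

lemma infcomps_mono:
  assumes cV: "connected_on V" and fF': "finite F'" and sub: "F \<subseteq> F'" and fin: "finite (infcomps F')"
  shows "card (infcomps F) \<le> card (infcomps F')"
proof -
  have ex: "\<exists>a. a \<in> K - F' \<and> comp (V - F') a \<in> infcomps F' \<and> comp (V - F') a \<subseteq> K"
    if K: "K \<in> infcomps F" for K
  proof -
    obtain a0 where a0: "a0 \<in> V - F" "K = comp (V - F) a0" "infinite (comp (V - F) a0)"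
      using K unfolding infcomps_def by blast
    obtain a where a: "a \<in> K - F'" "infinite (comp (K - F') a)"
      using konig[OF connected_comp[of "V - F" a0], of F'] a0 fF' by blast
    have e: "comp (K - F') a = comp (V - F - F') a"
      unfolding a0(2) by (rule comp_restrict) (use a a0 in auto)
    have e2: "V - F - F' = V - F'" using sub by blast
    have aV: "a \<in> V - F'" using a(1) comp_sub[OF a0(1)] a0(2) by blast
    have "comp (V - F') a \<subseteq> K" using e e2 comp_sub[of a "K - F'"] a(1) by auto
    then show ?thesis using a aV e e2 infcomp_mem[OF aV] by auto
  qed
  define \<phi> where "\<phi> K = comp (V - F') (SOME a. a \<in> K - F' \<and> comp (V - F') a \<in> infcomps F' \<and> comp (V - F') a \<subseteq> K)" for K
  have phi: "\<phi> K \<in> infcomps F'" "\<phi> K \<subseteq> K" "\<phi> K \<noteq> {}" if "K \<in> infcomps F" for K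
  proof -
    have "(SOME a. a \<in> K - F' \<and> comp (V - F') a \<in> infcomps F' \<and> comp (V - F') a \<subseteq> K) \<in> K - F'
      \<and> \<phi> K \<in> infcomps F' \<and> \<phi> K \<subseteq> K" unfolding \<phi>_def using someI_ex[OF ex[OF that]] by blast
    then show "\<phi> K \<in> infcomps F'" "\<phi> K \<subseteq> K" by auto
    show "\<phi> K \<noteq> {}" unfolding \<phi>_def using comp_self by blast
  qed
  have inj: "inj_on \<phi> (infcomps F)"
  proof (rule inj_onI)
    fix K1 K2 assume K: "K1 \<in> infcomps F" "K2 \<in> infcomps F" "\<phi> K1 = \<phi> K2"
    then have "K1 \<inter> K2 \<noteq> {}" using phi by blast
    moreover obtain a1 a2 where "K1 = comp (V - F) a1" "K2 = comp (V - F) a2" using K unfolding infcomps_def by blast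
    ultimately show "K1 = K2" using comp_disj by blast
  qed
  show ?thesis using card_inj_on_le[OF inj _ fin] phi by blast
qed

lemma one_ended_V:
  assumes "\<And>F. finite F \<Longrightarrow> finite (infcomps F) \<and> card (infcomps F) \<le> 1"
  shows "one_ended V"
  unfolding one_ended_def
proof (intro allI impI)
  fix F a b assume F: "finite F" and ab: "a \<in> V - F" "b \<in> V - F"
    and i: "infinite (comp (V - F) a)" "infinite (comp (V - F) b)"
  have m: "comp (V - F) a \<in> infcomps F" "comp (V - F) b \<in> infcomps F"
    using infcomp_mem ab i by auto
  have "finite (infcomps F)" "card (infcomps F) \<le> 1" using assms[OF F] by auto
  then show "comp (V - F) a = comp (V - F) b" using m card_le_Suc0_iff_eq[of "infcomps F"] by auto
qed

end

context lfg begin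

lemma comp_part:
  assumes "a0 \<in> V - P" "a \<in> comp (V - P) a0 - F"
  shows "comp (comp (V - P) a0 - F) a = comp (V - (P \<union> F)) a"
proof -
  have "comp (comp (V - P) a0 - F) a = comp (V - P - F) a" by (rule comp_restrict) (use assms in auto)
  moreover have "V - P - F = V - (P \<union> F)" by blast
  ultimately show ?thesis by simp
qed

lemma two_split:
  assumes cV: "connected_on V"
    and bd: "\<And>F. finite F \<Longrightarrow> finite (infcomps F) \<and> card (infcomps F) \<le> 2"
    and fP: "finite P" and PV: "P \<subseteq> V" and cP: "connected_on P" and c2: "card (infcomps P) = 2"
  shows "\<exists>K N. K \<union> N = V \<and> K \<inter> N = {} \<and> connected_on K \<and> connected_on N \<and> infinite K \<and> infinite N
    \<and> one_ended K \<and> one_ended N \<and> (\<exists>a\<in>N. \<exists>b\<in>K. adj a b)"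
proof -
  obtain K L where KL: "infcomps P = {K, L}" "K \<noteq> L" using c2 by (meson card_2_iff)
  have "K \<in> infcomps P" "L \<in> infcomps P" using KL by auto
  then obtain a0 c0 where a0: "a0 \<in> V - P" "K = comp (V - P) a0" "infinite K"
    and c0: "c0 \<in> V - P" "L = comp (V - P) c0" "infinite L"
    unfolding infcomps_def by blast
  have KVP: "K \<subseteq> V - P" using comp_sub[OF a0(1)] a0(2) by simp
  have LVP: "L \<subseteq> V - P" using comp_sub[OF c0(1)] c0(2) by simp
  have KLd: "K \<inter> L = {}" using KL(2) a0(2) c0(2) comp_disj by blast
  have cK: "connected_on K" "connected_on L" using a0(2) c0(2) connected_comp by auto
  define N where "N = V - K"
  have LN: "L \<subseteq> N" using KLd LVP unfolding N_def by blast
  have PN: "P \<subseteq> N" using KVP PV unfolding N_def by blast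
  have Pne: "P \<noteq> {}"
  proof
    assume "P = {}"
    then have "K = V" "L = V" using comp_connected[OF cV] a0 c0 by auto
    then show False using KL(2) by simp
  qed
  then obtain p0 where p0: "p0 \<in> P" by blast
  have iN: "infinite N" using LN c0(3) finite_subset by blast
  have tc: "conn N b p0" if b: "b \<in> N" for b
  proof (cases "b \<in> P")
    case True
    then have "conn P b p0" using cP p0 unfolding connected_on_def by blast
    then show ?thesis using PN conn_mono by blast
  next
    case False
    have bV: "b \<in> V - P" using b False unfolding N_def by blast
    define D where "D = comp (V - P) b"
    have "D \<noteq> K" using b unfolding D_def N_def by auto
    then have "D \<inter> K = {}" unfolding D_def a0(2) by (rule comp_disj)
    then have DN: "D \<subseteq> N" using comp_sub[OF bV] unfolding D_def N_def by blast
    obtain x y where xy: "x \<in> D" "y \<in> P" "adj x y" using attach[OF cV PV p0 bV] unfolding D_def by blast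
    have "conn D b x" using xy(1) conn_comp unfolding D_def comp_def by blast
    then have c1: "conn N b x" using DN conn_mono by blast
    have c2: "conn N x y" using xy DN PN by (intro conn_step) auto
    have "conn P y p0" using cP xy(2) p0 unfolding connected_on_def by blast
    then have c3: "conn N y p0" using PN conn_mono by blast
    show ?thesis using conn_trans[OF c1 conn_trans[OF c2 c3]] .
  qed
  have cN: "connected_on N" unfolding connected_on_def by (intro ballI conn_trans[OF tc conn_sym[OF tc]])
  have edge: "\<exists>a\<in>N. \<exists>b\<in>K. adj a b"
  proof -
    have a0K: "a0 \<in> K" using a0(2) by simp
    have p0K: "p0 \<notin> K" using KVP p0 by blast
    have "conn V a0 p0" using cV a0(1) p0 PV unfolding connected_on_def by blast
    then have "\<exists>x y. x \<in> K \<and> y \<notin> K \<and> adj x y \<and> x \<in> V \<and> y \<in> V \<and> conn V a0 x"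
      by (rule crossing[OF _ a0K p0K])
    then obtain x y where "x \<in> K" "y \<notin> K" "adj x y" "y \<in> V" by blast
    then show ?thesis unfolding N_def using asym by blast
  qed
  have oK: "one_ended K" unfolding one_ended_def
  proof (intro allI impI)
    fix F a b assume F: "finite F" and ab: "a \<in> K - F" "b \<in> K - F"
      and i: "infinite (comp (K - F) a)" "infinite (comp (K - F) b)"
    show "comp (K - F) a = comp (K - F) b"
    proof (rule ccontr)
      assume ne: "comp (K - F) a \<noteq> comp (K - F) b"
      define G' where "G' = P \<union> F"
      have ea: "comp (K - F) a = comp (V - G') a" unfolding G'_def a0(2) by (rule comp_part) (use a0 ab a0(2) in auto)
      have eb: "comp (K - F) b = comp (V - G') b" unfolding G'_def a0(2) by (rule comp_part) (use a0 ab a0(2) in auto)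
      obtain c where c: "c \<in> L - F" "infinite (comp (L - F) c)" using konig[OF cK(2) c0(3) F] by blast
      have ec: "comp (L - F) c = comp (V - G') c" unfolding G'_def c0(2) by (rule comp_part) (use c0 c c0(2) in auto)
      have VG: "a \<in> V - G'" "b \<in> V - G'" "c \<in> V - G'" using ab c KVP LVP unfolding G'_def by auto
      have m: "comp (V - G') a \<in> infcomps G'" "comp (V - G') b \<in> infcomps G'" "comp (V - G') c \<in> infcomps G'"
        using infcomp_mem VG i c(2) ea eb ec by auto
      have sa: "comp (V - G') a \<subseteq> K" using ea comp_sub[OF ab(1)] by auto
      have sb: "comp (V - G') b \<subseteq> K" using eb comp_sub[OF ab(2)] by auto
      have cc: "c \<in> comp (V - G') c" "c \<notin> K" using c KLd by auto
      have d: "comp (V - G') a \<noteq> comp (V - G') b" "comp (V - G') a \<noteq> comp (V - G') c"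
        "comp (V - G') b \<noteq> comp (V - G') c" using ne ea eb sa sb cc by auto
      have "3 \<le> card (infcomps G')" using three_card[OF _ m d] bd[of G'] F fP unfolding G'_def by auto
      then show False using bd[of G'] F fP unfolding G'_def by auto
    qed
  qed
  have piece: "\<exists>a'. a' \<in> comp (N - F) a \<and> a' \<in> V - (P \<union> F) \<and> infinite (comp (V - (P \<union> F)) a')
      \<and> comp (V - (P \<union> F)) a' \<subseteq> comp (N - F) a"
    if F: "finite F" and a: "a \<in> N - F" and ia: "infinite (comp (N - F) a)" for F a
  proof -
    define Ya where "Ya = comp (N - F) a"
    obtain a' where a': "a' \<in> Ya - P" "infinite (comp (Ya - P) a')"
      using konig[OF connected_comp[of "N - F" a, folded Ya_def] ia[folded Ya_def] fP] by blast
    have e1: "comp (Ya - P) a' = comp (N - F - P) a'" unfolding Ya_def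
      by (rule comp_restrict) (use a' a Ya_def in auto)
    have YaNF: "Ya \<subseteq> N - F" unfolding Ya_def using comp_sub[OF a] .
    have a'V: "a' \<in> V - (P \<union> F)" using a' YaNF unfolding N_def by blast
    have e2: "N - F - P = (V - (P \<union> F)) - K" unfolding N_def by blast
    have disj: "comp (V - (P \<union> F)) a' \<inter> K = {}"
    proof -
      have s: "comp (V - (P \<union> F)) a' \<subseteq> comp (V - P) a'" by (rule comp_mono) blast
      have "a' \<notin> K" using a'V unfolding N_def using a' YaNF unfolding N_def by blast
      then have "comp (V - P) a' \<noteq> K" using comp_self[of a' "V - P"] by blast
      then have "comp (V - P) a' \<inter> K = {}" unfolding a0(2) by (rule comp_disj)
      then show ?thesis using s by blast
    qed
    have e3: "comp ((V - (P \<union> F)) - K) a' = comp (V - (P \<union> F)) a'" by (rule comp_avoid[OF a'V disj])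
    have eq: "comp (Ya - P) a' = comp (V - (P \<union> F)) a'" using e1 e2 e3 by simp
    have "comp (Ya - P) a' \<subseteq> Ya" using comp_sub[of a' "Ya - P"] a' by blast
    then show ?thesis using a' a'V eq unfolding Ya_def by auto
  qed
  have oN: "one_ended N" unfolding one_ended_def
  proof (intro allI impI)
    fix F a b assume F: "finite F" and ab: "a \<in> N - F" "b \<in> N - F"
      and i: "infinite (comp (N - F) a)" "infinite (comp (N - F) b)"
    show "comp (N - F) a = comp (N - F) b"
    proof (rule ccontr)
      assume ne: "comp (N - F) a \<noteq> comp (N - F) b"
      then have dab: "comp (N - F) a \<inter> comp (N - F) b = {}" by (rule comp_disj)
      define G' where "G' = P \<union> F"
      obtain a' where a': "a' \<in> comp (N - F) a" "a' \<in> V - G'" "infinite (comp (V - G') a')"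
        "comp (V - G') a' \<subseteq> comp (N - F) a" using piece[OF F ab(1) i(1)] unfolding G'_def by blast
      obtain b' where b': "b' \<in> comp (N - F) b" "b' \<in> V - G'" "infinite (comp (V - G') b')"
        "comp (V - G') b' \<subseteq> comp (N - F) b" using piece[OF F ab(2) i(2)] unfolding G'_def by blast
      obtain c where c: "c \<in> K - F" "infinite (comp (K - F) c)" using konig[OF cK(1) a0(3) F] by blast
      have ec: "comp (K - F) c = comp (V - G') c" unfolding G'_def a0(2) by (rule comp_part) (use a0 c a0(2) in auto)
      have cV': "c \<in> V - G'" using c KVP unfolding G'_def by auto
      have m: "comp (V - G') a' \<in> infcomps G'" "comp (V - G') b' \<in> infcomps G'" "comp (V - G') c \<in> infcomps G'"
        using infcomp_mem a'(2,3) b'(2,3) cV' c(2) ec by auto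
      have NFN: "comp (N - F) a \<subseteq> N" "comp (N - F) b \<subseteq> N" using comp_sub[OF ab(1)] comp_sub[OF ab(2)] by auto
      have cK': "comp (V - G') c \<subseteq> K" using ec comp_sub[OF c(1)] by auto
      have d: "comp (V - G') a' \<noteq> comp (V - G') b'" "comp (V - G') a' \<noteq> comp (V - G') c"
        "comp (V - G') b' \<noteq> comp (V - G') c"
      proof -
        have "a' \<in> comp (V - G') a'" by simp
        then show "comp (V - G') a' \<noteq> comp (V - G') b'" using b'(4) a'(1) dab by blast
        show "comp (V - G') a' \<noteq> comp (V - G') c" using a'(4) NFN cK' \<open>a' \<in> comp (V - G') a'\<close>
          unfolding N_def by blast
        have "b' \<in> comp (V - G') b'" by simp
        then show "comp (V - G') b' \<noteq> comp (V - G') c" using b'(4) NFN cK' unfolding N_def by blast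
      qed
      have "3 \<le> card (infcomps G')" using three_card[OF _ m d] bd[of G'] F fP unfolding G'_def by auto
      then show False using bd[of G'] F fP unfolding G'_def by auto
    qed
  qed
  have "K \<union> N = V" "K \<inter> N = {}" using KVP unfolding N_def by auto
  then show ?thesis using cK(1) cN a0(3) iN oK oN edge by blast
qed

end


locale cay = group G for G :: "('a, 'b) monoid_scheme" (structure) +
  fixes S :: "'a set"
  assumes finS: "finite S" and SG: "S \<subseteq> carrier G" and gen: "generate G S = carrier G"
begin

definition cadj :: "'a \<Rightarrow> 'a \<Rightarrow> bool" where
  "cadj a b \<longleftrightarrow> a \<in> carrier G \<and> b \<in> carrier G \<and> (\<exists>s\<in>S. b = a \<otimes> s \<or> b = a \<otimes> inv s)"

lemma lcancel: "g \<in> carrier G \<Longrightarrow> x \<in> carrier G \<Longrightarrow> y \<in> carrier G \<Longrightarrow> g \<otimes> x = g \<otimes> y \<longleftrightarrow> x = y"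
  by simp

sublocale L: lfg "carrier G" cadj
proof
  fix a b
  show "cadj a b \<Longrightarrow> a \<in> carrier G \<and> b \<in> carrier G" unfolding cadj_def by blast
  show "cadj a b \<Longrightarrow> cadj b a"
  proof -
    assume "cadj a b"
    then obtain s where s: "s \<in> S" "b = a \<otimes> s \<or> b = a \<otimes> inv s" and ab: "a \<in> carrier G" "b \<in> carrier G"
      unfolding cadj_def by blast
    have sG: "s \<in> carrier G" using s SG by blast
    from s(2) have "a = b \<otimes> inv s \<or> a = b \<otimes> s"
    proof
      assume "b = a \<otimes> s" then have "a = b \<otimes> inv s" using sG ab by (simp add: m_assoc)
      then show ?thesis by blast
    next
      assume "b = a \<otimes> inv s" then have "a = b \<otimes> s" using sG ab by (simp add: m_assoc)
      then show ?thesis by blast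
    qed
    then show "cadj b a" unfolding cadj_def using s(1) ab by blast
  qed
  have "{b. cadj a b} \<subseteq> (\<lambda>s. a \<otimes> s) ` S \<union> (\<lambda>s. a \<otimes> inv s) ` S" unfolding cadj_def by blast
  then show "finite {b. cadj a b}" using finS by (meson finite_Un finite_imageI finite_subset)
qed

lemma cadj_transl: "g \<in> carrier G \<Longrightarrow> cadj a b \<Longrightarrow> cadj (g \<otimes> a) (g \<otimes> b)"
proof -
  assume g: "g \<in> carrier G" and "cadj a b"
  then obtain s where s: "s \<in> S" "b = a \<otimes> s \<or> b = a \<otimes> inv s" and ab: "a \<in> carrier G" "b \<in> carrier G"
    unfolding cadj_def by blast
  have sG: "s \<in> carrier G" using s SG by blast
  have "g \<otimes> b = g \<otimes> a \<otimes> s \<or> g \<otimes> b = g \<otimes> a \<otimes> inv s" using s(2) g ab sG by (auto simp: m_assoc)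
  then show ?thesis unfolding cadj_def using g ab s(1) by auto
qed

lemma conn_transl:
  assumes g: "g \<in> carrier G" and c: "L.conn W a b"
  shows "L.conn ((\<otimes>) g ` W) (g \<otimes> a) (g \<otimes> b)"
  using c unfolding L.conn_def
proof (induction rule: rtranclp_induct)
  case base then show ?case by simp
next
  case (step y z)
  have "cadj (g \<otimes> y) (g \<otimes> z)" using cadj_transl[OF g] step(2) by blast
  then show ?case using step by (auto intro: rtranclp.rtrancl_into_rtrancl)
qed

lemma img_carrier: "g \<in> carrier G \<Longrightarrow> (\<otimes>) g ` carrier G = carrier G"
proof -
  assume g: "g \<in> carrier G"
  have "x \<in> (\<otimes>) g ` carrier G" if "x \<in> carrier G" for x
  proof -
    have "x = g \<otimes> (inv g \<otimes> x)" using g that by (simp add: m_assoc[symmetric])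
    then show ?thesis using g that by blast
  qed
  then show ?thesis using g by auto
qed

lemma img_diff: "g \<in> carrier G \<Longrightarrow> P \<subseteq> carrier G \<Longrightarrow> (\<otimes>) g ` (carrier G - P) = carrier G - (\<otimes>) g ` P"
proof -
  assume g: "g \<in> carrier G" and P: "P \<subseteq> carrier G"
  show ?thesis
  proof
    show "(\<otimes>) g ` (carrier G - P) \<subseteq> carrier G - (\<otimes>) g ` P"
    proof
      fix y assume "y \<in> (\<otimes>) g ` (carrier G - P)"
      then obtain x where x: "x \<in> carrier G" "x \<notin> P" "y = g \<otimes> x" by blast
      have "y \<notin> (\<otimes>) g ` P"
      proof
        assume "y \<in> (\<otimes>) g ` P"
        then obtain p where "p \<in> P" "y = g \<otimes> p" by blast
        then have "x = p" using x g P by (metis lcancel subsetD)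
        then show False using x \<open>p \<in> P\<close> by blast
      qed
      then show "y \<in> carrier G - (\<otimes>) g ` P" using x g by simp
    qed
    show "carrier G - (\<otimes>) g ` P \<subseteq> (\<otimes>) g ` (carrier G - P)"
    proof
      fix y assume y: "y \<in> carrier G - (\<otimes>) g ` P"
      have e: "y = g \<otimes> (inv g \<otimes> y)" using g y by (simp add: m_assoc[symmetric])
      have "inv g \<otimes> y \<notin> P" using y e by (metis DiffD2 image_eqI)
      then show "y \<in> (\<otimes>) g ` (carrier G - P)" using e g y by blast
    qed
  qed
qed

lemma img_img: "g \<in> carrier G \<Longrightarrow> P \<subseteq> carrier G \<Longrightarrow> (\<otimes>) (inv g) ` (\<otimes>) g ` P = P"
proof -
  assume g: "g \<in> carrier G" and P: "P \<subseteq> carrier G"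
  have "inv g \<otimes> (g \<otimes> p) = p" if "p \<in> P" for p using g P that by (simp add: m_assoc[symmetric] subsetD)
  then show ?thesis by (force simp: image_image)
qed

lemma conn_one: "h \<in> generate G S \<Longrightarrow> L.conn (carrier G) \<one> h"
proof (induction rule: generate.induct)
  case one then show ?case by simp
next
  case (incl h)
  then have hG: "h \<in> carrier G" using SG by blast
  then have "h = \<one> \<otimes> h" by simp
  then have "cadj \<one> h" unfolding cadj_def using incl hG by blast
  then show ?case by (intro L.conn_step) (auto simp: cadj_def)
next
  case (inv h)
  then have hG: "h \<in> carrier G" using SG by blast
  then have "inv h = \<one> \<otimes> inv h" by simp
  then have "cadj \<one> (inv h)" unfolding cadj_def using inv hG by (metis inv_closed one_closed)
  then show ?case by (intro L.conn_step) (auto simp: cadj_def)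
next
  case (eng h1 h2)
  have h1: "h1 \<in> carrier G" using eng(1) gen by simp
  have "L.conn ((\<otimes>) h1 ` carrier G) (h1 \<otimes> \<one>) (h1 \<otimes> h2)" by (rule conn_transl[OF h1 eng(4)])
  then have "L.conn (carrier G) h1 (h1 \<otimes> h2)" using img_carrier[OF h1] h1 by simp
  then show ?case using eng(3) L.conn_trans by blast
qed

lemma connV: "L.connected_on (carrier G)"
  unfolding L.connected_on_def
proof (intro ballI)
  fix a b assume "a \<in> carrier G" "b \<in> carrier G"
  then have "L.conn (carrier G) \<one> a" "L.conn (carrier G) \<one> b" using conn_one gen by auto
  then show "L.conn (carrier G) a b" using L.conn_sym L.conn_trans by blast
qed

lemma comp_transl:
  assumes g: "g \<in> carrier G" and P: "P \<subseteq> carrier G" and a: "a \<in> carrier G - P"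
  shows "L.comp (carrier G - (\<otimes>) g ` P) (g \<otimes> a) = (\<otimes>) g ` L.comp (carrier G - P) a"
proof
  show "(\<otimes>) g ` L.comp (carrier G - P) a \<subseteq> L.comp (carrier G - (\<otimes>) g ` P) (g \<otimes> a)"
  proof
    fix y assume "y \<in> (\<otimes>) g ` L.comp (carrier G - P) a"
    then obtain x where x: "L.conn (carrier G - P) a x" "y = g \<otimes> x" unfolding L.comp_def by blast
    have "L.conn ((\<otimes>) g ` (carrier G - P)) (g \<otimes> a) (g \<otimes> x)" by (rule conn_transl[OF g x(1)])
    then show "y \<in> L.comp (carrier G - (\<otimes>) g ` P) (g \<otimes> a)"
      unfolding L.comp_def img_diff[OF g P] using x(2) by simp
  qed
  show "L.comp (carrier G - (\<otimes>) g ` P) (g \<otimes> a) \<subseteq> (\<otimes>) g ` L.comp (carrier G - P) a"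
  proof
    fix y assume "y \<in> L.comp (carrier G - (\<otimes>) g ` P) (g \<otimes> a)"
    then have c: "L.conn (carrier G - (\<otimes>) g ` P) (g \<otimes> a) y" unfolding L.comp_def by blast
    have yG: "y \<in> carrier G" using L.conn_in[OF c] g a by auto
    have ig: "inv g \<in> carrier G" using g by simp
    have "L.conn ((\<otimes>) (inv g) ` (carrier G - (\<otimes>) g ` P)) (inv g \<otimes> (g \<otimes> a)) (inv g \<otimes> y)"
      by (rule conn_transl[OF ig c])
    moreover have "(\<otimes>) (inv g) ` (carrier G - (\<otimes>) g ` P) = carrier G - P"
    proof -
      have "(\<otimes>) g ` P \<subseteq> carrier G" using g P by auto
      then have "(\<otimes>) (inv g) ` (carrier G - (\<otimes>) g ` P) = carrier G - (\<otimes>) (inv g) ` (\<otimes>) g ` P"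
        using img_diff[OF ig] by blast
      then show ?thesis using img_img[OF g P] by simp
    qed
    moreover have "inv g \<otimes> (g \<otimes> a) = a" using g a by (simp add: m_assoc[symmetric])
    ultimately have "inv g \<otimes> y \<in> L.comp (carrier G - P) a" unfolding L.comp_def by simp
    moreover have "y = g \<otimes> (inv g \<otimes> y)" using g yG by (simp add: m_assoc[symmetric])
    ultimately show "y \<in> (\<otimes>) g ` L.comp (carrier G - P) a" by blast
  qed
qed

end

context cay begin

lemma hopf:
  assumes bd: "\<And>F. finite F \<Longrightarrow> finite (L.infcomps F) \<and> card (L.infcomps F) \<le> m"
    and fP: "finite P" and PV: "P \<subseteq> carrier G" and cP: "L.connected_on P" and oneP: "\<one> \<in> P"
    and cm: "card (L.infcomps P) = m"
  shows "m \<le> 2"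
proof (rule ccontr)
  assume "\<not> m \<le> 2"
  then have m3: "m \<ge> 3" by simp
  define V where "V = carrier G"
  then have "L.infcomps P \<noteq> {}" using cm m3 by auto
  then obtain K1 where K1: "K1 \<in> L.infcomps P" by blast
  then obtain k where k: "k \<in> V - P" "K1 = L.comp (V - P) k" "infinite K1"
    unfolding L.infcomps_def V_def by blast
  define Z where "Z = (\<lambda>(x, y). x \<otimes> inv y) ` (P \<times> P)"
  have "finite Z" unfolding Z_def using fP by simp
  then obtain g where g: "g \<in> K1" "g \<notin> Z" using k(3) by (meson finite_subset subsetI)
  have K1V: "K1 \<subseteq> V - P" using L.comp_sub[OF k(1)] k(2) by simp
  have gG: "g \<in> carrier G" using g K1V unfolding V_def by blast
  define gP where "gP = (\<otimes>) g ` P"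
  have gPV: "gP \<subseteq> V" unfolding gP_def V_def using gG PV by auto
  have disj: "gP \<inter> P = {}"
  proof (rule ccontr)
    assume "gP \<inter> P \<noteq> {}"
    then obtain p q where pq: "p \<in> P" "q \<in> P" "g \<otimes> p = q" unfolding gP_def by blast
    then have "g = q \<otimes> inv p" using gG PV by (metis inv_solve_right subsetD)
    then have "g \<in> Z" unfolding Z_def using pq by force
    then show False using g by blast
  qed
  have ggP: "g \<in> gP" unfolding gP_def using oneP gG by (metis image_eqI r_one)
  have cgP: "L.connected_on gP" unfolding L.connected_on_def
  proof (intro ballI)
    fix x y assume "x \<in> gP" "y \<in> gP"
    then obtain p q where "p \<in> P" "q \<in> P" "x = g \<otimes> p" "y = g \<otimes> q" unfolding gP_def by blast
    moreover have "L.conn P p q" using cP \<open>p \<in> P\<close> \<open>q \<in> P\<close> unfolding L.connected_on_def by blast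
    ultimately show "L.conn gP x y" using conn_transl[OF gG] unfolding gP_def by blast
  qed
  have gPK1: "gP \<subseteq> K1"
  proof
    fix x assume "x \<in> gP"
    then have "L.conn gP g x" using cgP ggP unfolding L.connected_on_def by blast
    then have "L.conn (V - P) g x" using L.conn_mono gPV disj by blast
    then have "x \<in> L.comp (V - P) g" unfolding L.comp_def by simp
    then show "x \<in> K1" using L.comp_eq[of g "V - P" k] g k(2) by simp
  qed
  have oneV: "\<one> \<in> V - gP" using oneP disj unfolding V_def by auto
  define Q where "Q = L.comp (V - gP) \<one>"
  have fgP: "finite gP" unfolding gP_def using fP by simp
  have cgm: "card (L.infcomps gP) \<ge> m"
  proof -
    have inj: "inj_on ((`) ((\<otimes>) g)) (L.infcomps P)"
    proof -
      have "inj_on ((\<otimes>) g) V" unfolding V_def using gG by (intro inj_onI) simp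
      then have "inj_on ((`) ((\<otimes>) g)) (Pow V)" by (rule inj_on_image_Pow)
      moreover have "L.infcomps P \<subseteq> Pow V"
      proof
        fix X assume "X \<in> L.infcomps P"
        then obtain a where "a \<in> carrier G - P" "X = L.comp (carrier G - P) a" unfolding L.infcomps_def by blast
        then have "X \<subseteq> carrier G - P" using L.comp_sub by blast
        then show "X \<in> Pow V" unfolding V_def by blast
      qed
      ultimately show ?thesis using inj_on_subset by blast
    qed
    have sub: "(`) ((\<otimes>) g) ` L.infcomps P \<subseteq> L.infcomps gP"
    proof
      fix X assume "X \<in> (`) ((\<otimes>) g) ` L.infcomps P"
      then obtain a where a: "a \<in> V - P" "infinite (L.comp (V - P) a)" "X = (\<otimes>) g ` L.comp (V - P) a"
        unfolding L.infcomps_def V_def by blast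
      have e: "X = L.comp (V - gP) (g \<otimes> a)" using comp_transl[OF gG PV] a unfolding gP_def V_def by simp
      have ga: "g \<otimes> a \<in> V - gP" using img_diff[OF gG PV] a(1) unfolding gP_def V_def by blast
      have "inj_on ((\<otimes>) g) (L.comp (V - P) a)" using gG L.comp_sub[OF a(1)] unfolding V_def
        by (intro inj_onI) (metis DiffD1 lcancel subsetD)
      then have "infinite X" using a(2,3) finite_imageD by blast
      then show "X \<in> L.infcomps gP" using L.infcomp_mem ga e unfolding V_def by simp
    qed
    have "card ((`) ((\<otimes>) g) ` L.infcomps P) = m" using card_image[OF inj] cm by simp
    moreover have "finite (L.infcomps gP)" using bd fgP by blast
    ultimately show ?thesis using card_mono[OF _ sub] by simp
  qed
  define A1 where "A1 = L.infcomps P - {K1}"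
  define A2 where "A2 = L.infcomps gP - {Q}"
  define U where "U = P \<union> gP"
  have fU: "finite U" unfolding U_def using fP fgP by simp
  have eU1: "V - P - gP = V - U" "V - gP - P = V - U" unfolding U_def by auto
  have A1U: "A1 \<subseteq> L.infcomps U"
  proof
    fix X assume "X \<in> A1"
    then obtain a where a: "a \<in> V - P" "infinite (L.comp (V - P) a)" "X = L.comp (V - P) a" "X \<noteq> K1"
      unfolding A1_def L.infcomps_def V_def by blast
    have "X \<inter> K1 = {}" using a(3,4) k(2) L.comp_disj by blast
    then have "L.comp (V - P) a \<inter> gP = {}" using gPK1 a(3) by blast
    then have "L.comp (V - P - gP) a = X" using L.comp_avoid[OF a(1)] a(3) by blast
    moreover have "a \<in> V - U" using \<open>L.comp (V - P) a \<inter> gP = {}\<close> a(1) L.comp_self[of a "V - P"] unfolding U_def by blast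
    ultimately have "L.comp (V - U) a = X" "a \<in> V - U" using eU1 by auto
    then show "X \<in> L.infcomps U" using L.infcomp_mem[of a U] a(2,3) unfolding V_def by simp
  qed
  have A2U: "A2 \<subseteq> L.infcomps U" and A2K1: "\<forall>X\<in>A2. X \<subseteq> K1 \<and> X \<noteq> {}"
  proof -
    have *: "X \<in> L.infcomps U \<and> X \<subseteq> K1 \<and> X \<noteq> {}" if X: "X \<in> A2" for X
    proof -
      obtain a where a: "a \<in> V - gP" "infinite (L.comp (V - gP) a)" "X = L.comp (V - gP) a" "X \<noteq> Q"
        using X unfolding A2_def L.infcomps_def V_def by blast
      have "X \<inter> Q = {}" using a(3,4) unfolding Q_def using L.comp_disj by blast
      moreover have "P \<subseteq> Q"
      proof
        fix x assume "x \<in> P"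
        then have "L.conn P \<one> x" using cP oneP unfolding L.connected_on_def by blast
        then have "L.conn (V - gP) \<one> x" using L.conn_mono PV disj unfolding V_def by blast
        then show "x \<in> Q" unfolding Q_def L.comp_def by simp
      qed
      ultimately have XP: "X \<inter> P = {}" by blast
      then have "L.comp (V - gP - P) a = X" using L.comp_avoid[OF a(1)] a(3) by blast
      moreover have aU: "a \<in> V - U" using XP a(1,3) unfolding U_def by auto
      ultimately have "L.comp (V - U) a = X" "a \<in> V - U" using eU1 by auto
      then have m1: "X \<in> L.infcomps U" using L.infcomp_mem[of a U] a(2,3) unfolding V_def by simp
      have XVP: "X \<subseteq> V - P" using L.comp_sub[OF a(1)] a(3) XP by blast
      obtain x y where xy: "x \<in> L.comp (V - gP) a" "y \<in> gP" "cadj x y"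
        using L.attach[OF connV gPV[unfolded V_def] ggP a(1)[unfolded V_def]] unfolding V_def by blast
      have "X \<subseteq> K1"
      proof
        fix b assume b: "b \<in> X"
        have "L.conn X b x" using L.connected_comp[of "V - gP" a] a(3) b xy(1) unfolding L.connected_on_def by blast
        then have c1: "L.conn (V - P) b x" using XVP L.conn_mono by blast
        have c2: "L.conn (V - P) x y" using xy XVP a(3) gPV disj by (intro L.conn_step) auto
        have "y \<in> K1" using xy(2) gPK1 by blast
        then have "L.conn (V - P) k y" using k(2) unfolding L.comp_def by simp
        then have "L.conn (V - P) k b" using L.conn_trans[OF _ L.conn_sym[OF L.conn_trans[OF c1 c2]]] by blast
        then show "b \<in> K1" using k(2) unfolding L.comp_def by simp
      qed
      moreover have "X \<noteq> {}" using a(3) L.comp_self by blast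
      ultimately show ?thesis using m1 by blast
    qed
    show "A2 \<subseteq> L.infcomps U" using * by blast
    show "\<forall>X\<in>A2. X \<subseteq> K1 \<and> X \<noteq> {}" using * by blast
  qed
  have A12: "A1 \<inter> A2 = {}"
  proof (rule ccontr)
    assume "A1 \<inter> A2 \<noteq> {}"
    then obtain X where X: "X \<in> A1" "X \<in> A2" by blast
    then obtain a where "X = L.comp (V - P) a" "X \<noteq> K1" unfolding A1_def L.infcomps_def V_def by blast
    then have "X \<inter> K1 = {}" using k(2) L.comp_disj by blast
    then show False using A2K1 X(2) by blast
  qed
  have fin: "finite (L.infcomps U)" using bd fU by blast
  have c1: "card A1 = m - 1" unfolding A1_def using cm K1 bd[OF fP] by simp
  have c2: "card A2 \<ge> m - 1"
  proof -
    have "card A2 \<ge> card (L.infcomps gP) - 1" unfolding A2_def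
      using diff_card_le_card_Diff[of "{Q}" "L.infcomps gP"] by simp
    then show ?thesis using cgm by linarith
  qed
  have "card (A1 \<union> A2) = card A1 + card A2"
    using card_Un_disjoint[OF finite_subset[OF A1U fin] finite_subset[OF A2U fin] A12] .
  moreover have "card (A1 \<union> A2) \<le> card (L.infcomps U)" using card_mono[OF fin] A1U A2U by blast
  moreover have "card (L.infcomps U) \<le> m" using bd fU by blast
  ultimately show False using c1 c2 m3 by linarith
qed

end


context lfg begin
lemma near_sym: "near a b \<Longrightarrow> near b a"
  unfolding near_def using asym by blast
lemma adj_near: "adj a b \<Longrightarrow> near a b"
  unfolding near_def by blast
end

context cay begin

lemma edge_iff: "{u, v} \<in> cay_edges G S \<longleftrightarrow> cadj u v"
proof
  assume "{u, v} \<in> cay_edges G S"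
  then obtain g h where gh: "{u, v} = {g, h}" "cadj g h" unfolding cay_edges_def cadj_def by blast
  then show "cadj u v" using L.asym by (metis doubleton_eq_iff)
next
  assume "cadj u v"
  then show "{u, v} \<in> cay_edges G S" unfolding cay_edges_def cadj_def by blast
qed

lemma bound:
  assumes "graph_finitely_many_ends (carrier G) (cay_edges G S)"
  shows "\<exists>n. \<forall>F. finite F \<longrightarrow> finite (L.infcomps F) \<and> card (L.infcomps F) \<le> n"
proof -
  obtain n where n: "\<forall>A. finite A \<longrightarrow> (let C = {X \<in> components (carrier G) (cay_edges G S - A). infinite X}
      in finite C \<and> card C \<le> n)" using assms unfolding graph_finitely_many_ends_def by blast
  have "finite (L.infcomps F) \<and> card (L.infcomps F) \<le> n" if F: "finite F" for F
  proof -
    define A where "A = {e \<in> cay_edges G S. e \<inter> F \<noteq> {}}"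
    have "A \<subseteq> (\<lambda>(x, y). {x, y}) ` (SIGMA x:F. {y. cadj x y})"
    proof
      fix e assume "e \<in> A"
      then obtain g h where gh: "e = {g, h}" "cadj g h" "g \<in> F \<or> h \<in> F"
        unfolding A_def cay_edges_def cadj_def by blast
      show "e \<in> (\<lambda>(x, y). {x, y}) ` (SIGMA x:F. {y. cadj x y})"
      proof (cases "g \<in> F")
        case True then show ?thesis using gh by force
      next
        case False
        then have "h \<in> F" "cadj h g" "e = {h, g}" using gh L.asym by auto
        then show ?thesis by force
      qed
    qed
    moreover have "finite (SIGMA x:F. {y. cadj x y})" using F L.lfin by blast
    ultimately have fA: "finite A" by (meson finite_imageI finite_subset)
    have rel: "(\<lambda>u v. {u, v} \<in> cay_edges G S - A) = (\<lambda>x y. cadj x y \<and> x \<in> carrier G - F \<and> y \<in> carrier G - F)"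
      unfolding A_def using edge_iff L.adjV by (intro ext) blast
    have "L.infcomps F \<subseteq> {X \<in> components (carrier G) (cay_edges G S - A). infinite X}"
    proof
      fix X assume "X \<in> L.infcomps F"
      then obtain a where a: "a \<in> carrier G - F" "X = L.comp (carrier G - F) a" "infinite X"
        unfolding L.infcomps_def by blast
      have "X = {y. (\<lambda>u v. {u, v} \<in> cay_edges G S - A)\<^sup>*\<^sup>* a y}"
        unfolding rel a(2) L.comp_def L.conn_def by simp
      then show "X \<in> {X \<in> components (carrier G) (cay_edges G S - A). infinite X}"
        unfolding components_def using a by blast
    qed
    moreover have "finite {X \<in> components (carrier G) (cay_edges G S - A). infinite X}"
      "card {X \<in> components (carrier G) (cay_edges G S - A). infinite X} \<le> n"
      using n fA unfolding Let_def by auto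
    ultimately show ?thesis by (meson card_mono finite_subset order_trans)
  qed
  then show ?thesis by blast
qed

definition T3 :: "'a set" where "T3 = insert \<one> (S \<union> (\<lambda>s. inv s) ` S)"
definition S3 :: "'a set" where "S3 = (\<lambda>(a, b, c). a \<otimes> b \<otimes> c) ` (T3 \<times> T3 \<times> T3)"

lemma T3G: "T3 \<subseteq> carrier G" unfolding T3_def using SG by auto

lemma S3_gen: "fin_gen_set G S3"
proof -
  have fT: "finite T3" unfolding T3_def using finS by simp
  have f: "finite S3" unfolding S3_def using fT by simp
  have sub: "S3 \<subseteq> carrier G" unfolding S3_def using T3G by auto
  have "S \<subseteq> S3"
  proof
    fix s assume "s \<in> S"
    then have "s = s \<otimes> \<one> \<otimes> \<one>" "s \<in> T3" "\<one> \<in> T3" using SG unfolding T3_def by auto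
    then show "s \<in> S3" unfolding S3_def by force
  qed
  then have "carrier G \<subseteq> generate G S3" using gen mono_generate by blast
  moreover have "generate G S3 \<subseteq> carrier G" using generate_incl[OF sub] .
  ultimately show ?thesis unfolding fin_gen_set_def using f sub by blast
qed

lemma step_T3: "a \<in> carrier G \<Longrightarrow> a = c \<or> cadj a c \<Longrightarrow> \<exists>t\<in>T3. c = a \<otimes> t"
proof -
  assume a: "a \<in> carrier G" and o: "a = c \<or> cadj a c"
  from o show ?thesis
  proof
    assume "a = c" then show ?thesis using a unfolding T3_def by (intro bexI[of _ \<one>]) auto
  next
    assume "cadj a c" then show ?thesis unfolding cadj_def T3_def by blast
  qed
qed

lemma near_edge:
  assumes a: "a \<in> carrier G" and n: "L.near a b"
  shows "{a, b} \<in> cay_edges G S3"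
proof -
  obtain c d where cd: "a = c \<or> cadj a c" "c = d \<or> cadj c d" "d = b \<or> cadj d b" using n unfolding L.near_def by blast
  obtain t1 where t1: "t1 \<in> T3" "c = a \<otimes> t1" using step_T3[OF a cd(1)] by blast
  have cG: "c \<in> carrier G" using t1 a T3G by auto
  obtain t2 where t2: "t2 \<in> T3" "d = c \<otimes> t2" using step_T3[OF cG cd(2)] by blast
  have dG: "d \<in> carrier G" using t2 cG T3G by auto
  obtain t3 where t3: "t3 \<in> T3" "b = d \<otimes> t3" using step_T3[OF dG cd(3)] by blast
  have tG: "t1 \<in> carrier G" "t2 \<in> carrier G" "t3 \<in> carrier G" using t1 t2 t3 T3G by auto
  have "b = a \<otimes> (t1 \<otimes> t2 \<otimes> t3)" using t1 t2 t3 tG a by (simp add: m_assoc)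
  moreover have "t1 \<otimes> t2 \<otimes> t3 \<in> S3" unfolding S3_def using t1 t2 t3 by force
  moreover have "b \<in> carrier G" using t3 dG tG by simp
  ultimately show ?thesis unfolding cay_edges_def using a by blast
qed

lemma ham_from_near:
  assumes "int_interval I" "bij_betw f I (carrier G)" "\<And>i. i \<in> I \<Longrightarrow> i + 1 \<in> I \<Longrightarrow> L.near (f i) (f (i + 1))"
  shows "cayley_ham_path G S3"
  unfolding cayley_ham_path_def
proof (intro exI[of _ I] exI[of _ f] conjI allI impI)
  show "int_interval I" "bij_betw f I (carrier G)" using assms by auto
  fix i assume "i \<in> I" "i + 1 \<in> I"
  then show "{f i, f (i + 1)} \<in> cay_edges G S3"
    using near_edge assms(3) bij_betwE[OF assms(2)] by blast
qed

lemma nat_bij: "bij_betw nat {i::int. 0 \<le> i} UNIV"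
  unfolding bij_betw_def
proof
  show "inj_on nat {i::int. 0 \<le> i}" by (intro inj_onI) auto
  show "nat ` {i::int. 0 \<le> i} = UNIV"
  proof (intro equalityI subsetI)
    fix n :: nat show "n \<in> nat ` {i. 0 \<le> i}" by (rule image_eqI[of _ _ "int n"]) auto
  qed auto
qed

lemma ham_exists:
  assumes bd0: "\<exists>n. \<forall>F. finite F \<longrightarrow> finite (L.infcomps F) \<and> card (L.infcomps F) \<le> n"
  shows "\<exists>S'. fin_gen_set G S' \<and> cayley_ham_path G S'"
proof (cases "finite (carrier G)")
  case True
  have fg: "fin_gen_set G (carrier G)" unfolding fin_gen_set_def
    using True generate_incl[of "carrier G"] generate.incl[of _ "carrier G" G] by blast
  obtain h where h: "bij_betw h {0..<card (carrier G)} (carrier G)" using ex_bij_betw_nat_finite[OF True] by blast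
  define I where "I = {0..<int (card (carrier G))}"
  have bn: "bij_betw nat I {0..<card (carrier G)}" unfolding I_def bij_betw_def
  proof
    show "inj_on nat {0..<int (card (carrier G))}" by (intro inj_onI) auto
    show "nat ` {0..<int (card (carrier G))} = {0..<card (carrier G)}"
    proof (intro equalityI subsetI)
      fix n assume "n \<in> {0..<card (carrier G)}"
      then show "n \<in> nat ` {0..<int (card (carrier G))}" by (intro image_eqI[of _ _ "int n"]) auto
    qed auto
  qed
  have b: "bij_betw (h \<circ> nat) I (carrier G)" using bij_betw_trans[OF bn h] .
  have "cayley_ham_path G (carrier G)" unfolding cayley_ham_path_def
  proof (intro exI[of _ I] exI[of _ "h \<circ> nat"] conjI allI impI)
    show "int_interval I" unfolding int_interval_def I_def by auto
    show "bij_betw (h \<circ> nat) I (carrier G)" by (rule b)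
    fix i assume i: "i \<in> I" "i + 1 \<in> I"
    define g where "g = (h \<circ> nat) i"
    define k where "k = (h \<circ> nat) (i + 1)"
    have gk: "g \<in> carrier G" "k \<in> carrier G" using i b bij_betwE unfolding g_def k_def by blast+
    have "k = g \<otimes> (inv g \<otimes> k)" using gk by (simp add: m_assoc[symmetric])
    then show "{(h \<circ> nat) i, (h \<circ> nat) (i + 1)} \<in> cay_edges G (carrier G)"
      unfolding cay_edges_def g_def[symmetric] k_def[symmetric] using gk by blast
  qed
  then show ?thesis using fg by blast
next
  case False
  define V where "V = carrier G"
  obtain n where n: "\<forall>F. finite F \<longrightarrow> finite (L.infcomps F) \<and> card (L.infcomps F) \<le> n" using bd0 by blast
  define M where "M = {card (L.infcomps F) | F. finite F}"
  have "M \<subseteq> {..n}" unfolding M_def using n by blast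
  then have fM: "finite M" using finite_subset by blast
  have "card (L.infcomps {}) \<in> M" unfolding M_def by (intro CollectI exI[of _ "{}"]) simp
  then have neM: "M \<noteq> {}" by blast
  define m where "m = Max M"
  have "m \<in> M" unfolding m_def using Max_in[OF fM neM] .
  then obtain F1 where F1: "finite F1" "card (L.infcomps F1) = m" unfolding M_def by auto
  have bd: "finite (L.infcomps F) \<and> card (L.infcomps F) \<le> m" if H: "finite F" for F
  proof
    show "finite (L.infcomps F)" using n H by blast
    have "card (L.infcomps F) \<in> M" unfolding M_def using H by blast
    then show "card (L.infcomps F) \<le> m" unfolding m_def using Max_ge[OF fM] by blast
  qed
  obtain P where P: "finite P" "P \<subseteq> V" "\<one> \<in> P" "F1 \<inter> V \<subseteq> P" "L.connected_on P"
    using L.connected_hull[OF connV, of \<one> "F1 \<inter> carrier G"] F1(1) unfolding V_def by auto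
  have e: "L.infcomps (F1 \<inter> V) = L.infcomps F1"
  proof -
    have "carrier G - F1 \<inter> V = carrier G - F1" unfolding V_def by blast
    then show ?thesis unfolding L.infcomps_def by simp
  qed
  have "card (L.infcomps (F1 \<inter> V)) \<le> card (L.infcomps P)"
    using L.infcomps_mono[OF connV P(1) P(4)] bd[OF P(1)] by blast
  then have cm: "card (L.infcomps P) = m" using e F1(2) bd[OF P(1)] by simp
  have m2: "m \<le> 2" using hopf[OF bd P(1) P(2)[unfolded V_def] P(5) P(3) cm] .
  have iV: "infinite (carrier G)" using False .
  have "cayley_ham_path G S3"
  proof (cases "m \<le> 1")
    case True
    have "L.one_ended (carrier G)" using bd True by (intro L.one_ended_V) (meson order_trans)
    then obtain r where r: "bij_betw r UNIV (carrier G)" "\<forall>i. L.near (r i) (r (Suc i))"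
      using L.ray[OF connV iV _ one_closed] by blast
    define I where "I = {i::int. 0 \<le> i}"
    have b: "bij_betw (r \<circ> nat) I (carrier G)" unfolding I_def using bij_betw_trans[OF nat_bij r(1)] .
    show ?thesis
    proof (rule ham_from_near[OF _ b])
      show "int_interval I" unfolding int_interval_def I_def by auto
      fix i assume "i \<in> I" "i + 1 \<in> I"
      then have "nat (i + 1) = Suc (nat i)" unfolding I_def by auto
      then show "L.near ((r \<circ> nat) i) ((r \<circ> nat) (i + 1))" using r(2) by simp
    qed
  next
    case False
    then have m2': "m = 2" using m2 by simp
    have bd2: "finite (L.infcomps F) \<and> card (L.infcomps F) \<le> 2" if H: "finite F" for F
      using bd[OF H] m2' by simp
    have "\<exists>K N. K \<union> N = carrier G \<and> K \<inter> N = {} \<and> L.connected_on K \<and> L.connected_on N \<and> infinite K \<and> infinite N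
    \<and> L.one_ended K \<and> L.one_ended N \<and> (\<exists>a\<in>N. \<exists>b\<in>K. cadj a b)"
      by (rule L.two_split[OF connV bd2 P(1) P(2)[unfolded V_def] P(5) cm[unfolded m2']])
    then obtain K N where KN: "K \<union> N = carrier G" "K \<inter> N = {}" "L.connected_on K" "L.connected_on N"
      "infinite K" "infinite N" "L.one_ended K" "L.one_ended N" "\<exists>a\<in>N. \<exists>b\<in>K. cadj a b"
      by blast
    obtain a b where ab: "a \<in> N" "b \<in> K" "cadj a b" using KN(9) by blast
    obtain rK where rK: "bij_betw rK UNIV K" "rK 0 = b" "\<forall>i. L.near (rK i) (rK (Suc i))"
      using L.ray[OF KN(3) KN(5) KN(7) ab(2)] by blast
    obtain rN where rN: "bij_betw rN UNIV N" "rN 0 = a" "\<forall>i. L.near (rN i) (rN (Suc i))"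
      using L.ray[OF KN(4) KN(6) KN(8) ab(1)] by blast
    define f where "f i = (if 0 \<le> i then rK (nat i) else rN (nat (- i - 1)))" for i :: int
    have inK: "rK x \<in> K" "rN x \<in> N" for x using rK(1) rN(1) bij_betwE by blast+
    have b: "bij_betw f UNIV (carrier G)" unfolding bij_betw_def
    proof
      show "inj f"
      proof (rule injI)
        fix i j assume e: "f i = f j"
        have iK: "inj rK" "inj rN" using rK(1) rN(1) bij_betw_def by auto
        show "i = j"
        proof (cases "0 \<le> i"; cases "0 \<le> j")
          assume "0 \<le> i" "0 \<le> j"
          then have "rK (nat i) = rK (nat j)" using e unfolding f_def by simp
          then show "i = j" using iK(1) \<open>0 \<le> i\<close> \<open>0 \<le> j\<close> by (metis injD nat_eq_iff2)
        next
          assume "0 \<le> i" "\<not> 0 \<le> j"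
          then have "rK (nat i) = rN (nat (- j - 1))" using e unfolding f_def by simp
          then show "i = j" using inK KN(2) by (metis disjoint_iff)
        next
          assume "\<not> 0 \<le> i" "0 \<le> j"
          then have "rN (nat (- i - 1)) = rK (nat j)" using e unfolding f_def by simp
          then show "i = j" using inK KN(2) by (metis disjoint_iff)
        next
          assume "\<not> 0 \<le> i" "\<not> 0 \<le> j"
          then have "rN (nat (- i - 1)) = rN (nat (- j - 1))" using e unfolding f_def by simp
          then have "nat (- i - 1) = nat (- j - 1)" using iK(2) by (meson injD)
          then show "i = j" using \<open>\<not> 0 \<le> i\<close> \<open>\<not> 0 \<le> j\<close> by simp
        qed
      qed
      show "range f = carrier G"
      proof (intro equalityI subsetI)
        fix x assume "x \<in> range f"
        then obtain i where "x = f i" by blast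
        then show "x \<in> carrier G" using inK KN(1) unfolding f_def by (cases "0 \<le> i") auto
      next
        fix x assume "x \<in> carrier G"
        then have "x \<in> K \<or> x \<in> N" using KN(1) by blast
        then show "x \<in> range f"
        proof
          assume "x \<in> K"
          then obtain k where "x = rK k" using rK(1) by (metis bij_betw_def imageE)
          then have "f (int k) = x" unfolding f_def by simp
          then show ?thesis by (metis rangeI)
        next
          assume "x \<in> N"
          then obtain k where "x = rN k" using rN(1) by (metis bij_betw_def imageE)
          then have "f (- int k - 1) = x" unfolding f_def by simp
          then show ?thesis by (metis rangeI)
        qed
      qed
    qed
    show ?thesis
    proof (rule ham_from_near[OF _ b])
      show "int_interval UNIV" unfolding int_interval_def by auto
      fix i :: int
      consider "0 \<le> i" | "i = -1" | "i < -1" by linarith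
      then show "L.near (f i) (f (i + 1))"
      proof cases
        case 1
        then have "nat (i + 1) = Suc (nat i)" by auto
        then show ?thesis using 1 rK(3) unfolding f_def by simp
      next
        case 2
        then show ?thesis unfolding f_def using rK(2) rN(2) ab(3) L.adj_near by simp
      next
        case 3
        then have "nat (- i - 1) = Suc (nat (- (i + 1) - 1))" by auto
        then show ?thesis using 3 rN(3) L.near_sym unfolding f_def by simp
      qed
    qed
  qed
  then show ?thesis using S3_gen by blast
qed

end

context cay begin

lemma gen_path:
  "s \<in> generate G S \<Longrightarrow> \<exists>Pp. finite Pp \<and> Pp \<subseteq> carrier G \<and>
     (\<forall>g\<in>carrier G. \<forall>B. (\<forall>p\<in>Pp. g \<otimes> p \<notin> B) \<longrightarrow> L.conn (carrier G - B) g (g \<otimes> s))"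
proof (induction rule: generate.induct)
  case one
  show ?case by (intro exI[of _ "{}"]) auto
next
  case (incl h)
  have hG: "h \<in> carrier G" using incl SG by blast
  show ?case
  proof (intro exI[of _ "{\<one>, h}"] conjI ballI allI impI)
    fix g B assume g: "g \<in> carrier G" and nb: "\<forall>p\<in>{\<one>, h}. g \<otimes> p \<notin> B"
    have "cadj g (g \<otimes> h)" unfolding cadj_def using g hG incl by blast
    moreover have "g \<notin> B" "g \<otimes> h \<notin> B" using nb g by auto
    ultimately show "L.conn (carrier G - B) g (g \<otimes> h)" using g hG by (intro L.conn_step) auto
  qed (use hG in auto)
next
  case (inv h)
  have hG: "h \<in> carrier G" using inv SG by blast
  show ?case
  proof (intro exI[of _ "{\<one>, inv h}"] conjI ballI allI impI)
    fix g B assume g: "g \<in> carrier G" and nb: "\<forall>p\<in>{\<one>, inv h}. g \<otimes> p \<notin> B"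
    have "cadj g (g \<otimes> inv h)" unfolding cadj_def using g hG inv by blast
    moreover have "g \<notin> B" "g \<otimes> inv h \<notin> B" using nb g by auto
    ultimately show "L.conn (carrier G - B) g (g \<otimes> inv h)" using g hG by (intro L.conn_step) auto
  qed (use hG in auto)
next
  case (eng h1 h2)
  obtain P1 where P1: "finite P1" "P1 \<subseteq> carrier G"
    "\<forall>g\<in>carrier G. \<forall>B. (\<forall>p\<in>P1. g \<otimes> p \<notin> B) \<longrightarrow> L.conn (carrier G - B) g (g \<otimes> h1)" using eng(3) by blast
  obtain P2 where P2: "finite P2" "P2 \<subseteq> carrier G"
    "\<forall>g\<in>carrier G. \<forall>B. (\<forall>p\<in>P2. g \<otimes> p \<notin> B) \<longrightarrow> L.conn (carrier G - B) g (g \<otimes> h2)" using eng(4) by blast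
  have h12: "h1 \<in> carrier G" "h2 \<in> carrier G" using eng(1,2) gen by auto
  show ?case
  proof (intro exI[of _ "P1 \<union> (\<otimes>) h1 ` P2"] conjI ballI allI impI)
    show "finite (P1 \<union> (\<otimes>) h1 ` P2)" using P1 P2 by simp
    show "P1 \<union> (\<otimes>) h1 ` P2 \<subseteq> carrier G" using P1 P2 h12 by auto
    fix g B assume g: "g \<in> carrier G" and nb: "\<forall>p\<in>P1 \<union> (\<otimes>) h1 ` P2. g \<otimes> p \<notin> B"
    have c1: "L.conn (carrier G - B) g (g \<otimes> h1)" using P1(3) g nb by blast
    have g1: "g \<otimes> h1 \<in> carrier G" using g h12 by simp
    have "\<forall>p\<in>P2. (g \<otimes> h1) \<otimes> p \<notin> B"
    proof
      fix p assume p: "p \<in> P2"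
      then have "g \<otimes> (h1 \<otimes> p) \<notin> B" using nb by blast
      then show "(g \<otimes> h1) \<otimes> p \<notin> B" using g h12 p P2(2) by (simp add: m_assoc subsetD)
    qed
    then have c2: "L.conn (carrier G - B) (g \<otimes> h1) ((g \<otimes> h1) \<otimes> h2)" using P2(3) g1 by blast
    have "(g \<otimes> h1) \<otimes> h2 = g \<otimes> (h1 \<otimes> h2)" using g h12 by (simp add: m_assoc)
    then show "L.conn (carrier G - B) g (g \<otimes> (h1 \<otimes> h2))" using L.conn_trans[OF c1 c2] by simp
  qed
qed

lemma int_bound: "finite (X :: int set) \<Longrightarrow> \<exists>N. \<forall>i\<in>X. \<bar>i\<bar> < N"
proof (induction rule: finite_induct)
  case empty then show ?case by simp
next
  case (insert x X)
  then obtain N where "\<forall>i\<in>X. \<bar>i\<bar> < N" by blast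
  then show ?case by (intro exI[of _ "max N (\<bar>x\<bar> + 1)"]) auto
qed

lemma ham_to_ends:
  assumes S0: "fin_gen_set G S0" and hp: "cayley_ham_path G S0"
  shows "graph_finitely_many_ends (carrier G) (cay_edges G S)"
proof -
  define V where "V = carrier G"
  obtain I f where If: "int_interval I" "bij_betw f I V"
    "\<And>i. i \<in> I \<Longrightarrow> i + 1 \<in> I \<Longrightarrow> {f i, f (i + 1)} \<in> cay_edges G S0"
    using hp unfolding cayley_ham_path_def V_def by blast
  have S0G: "S0 \<subseteq> carrier G" "finite S0" using S0 unfolding fin_gen_set_def by auto
  define D where "D = S0 \<union> (\<lambda>s. inv s) ` S0"
  have DG: "D \<subseteq> carrier G" unfolding D_def using S0G by auto
  have "\<forall>t\<in>D. \<exists>Pp. finite Pp \<and> Pp \<subseteq> carrier G \<and>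
     (\<forall>g\<in>carrier G. \<forall>B. (\<forall>p\<in>Pp. g \<otimes> p \<notin> B) \<longrightarrow> L.conn (carrier G - B) g (g \<otimes> t))"
    using gen_path DG gen by blast
  then obtain PP where PP: "\<And>t. t \<in> D \<Longrightarrow> finite (PP t) \<and> PP t \<subseteq> carrier G \<and>
     (\<forall>g\<in>carrier G. \<forall>B. (\<forall>p\<in>PP t. g \<otimes> p \<notin> B) \<longrightarrow> L.conn (carrier G - B) g (g \<otimes> t))"
    by metis
  define Pall where "Pall = \<Union> (PP ` D)"
  have fD: "finite D" unfolding D_def using S0G by simp
  have fPall: "finite Pall" "Pall \<subseteq> carrier G" unfolding Pall_def using PP fD by auto
  have fV: "f i \<in> V" if "i \<in> I" for i using If(2) that bij_betwE by blast
  have "\<forall>A. finite A \<longrightarrow> (let C = {X \<in> components V (cay_edges G S - A). infinite X} in finite C \<and> card C \<le> 2)"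
  proof (intro allI impI)
    fix A :: "'a set set" assume fA: "finite A"
    define E where "E = cay_edges G S"
    define B where "B = \<Union> (A \<inter> E)"
    have fB: "finite B"
    proof -
      have "\<forall>e\<in>A \<inter> E. finite e" unfolding E_def cay_edges_def by auto
      then show ?thesis unfolding B_def using fA by auto
    qed
    define R where "R = (\<lambda>u v. {u, v} \<in> E - A)"
    have Rsym: "R u v \<Longrightarrow> R v u" for u v unfolding R_def by (simp add: insert_commute)
    have RsV: "R u v \<Longrightarrow> u \<in> V \<and> v \<in> V" for u v unfolding R_def E_def V_def using edge_iff L.adjV by blast
    have Rs: "R\<^sup>*\<^sup>* u v \<Longrightarrow> R\<^sup>*\<^sup>* v u" for u v
    proof (induction rule: rtranclp_induct)
      case base then show ?case by simp
    next
      case (step y z) then show ?case using Rsym by (meson converse_rtranclp_into_rtranclp)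
    qed
    have Rc: "L.conn (V - B) x y \<Longrightarrow> R\<^sup>*\<^sup>* x y" for x y
      unfolding L.conn_def
    proof (induction rule: rtranclp_induct)
      case base then show ?case by simp
    next
      case (step y z)
      have "{y, z} \<in> E" unfolding E_def using edge_iff step(2) by blast
      moreover have "{y, z} \<notin> A" using step(2) \<open>{y, z} \<in> E\<close> unfolding B_def by blast
      ultimately have "R y z" unfolding R_def by blast
      then show ?case using step(3) by (simp add: rtranclp.rtrancl_into_rtrancl)
    qed
    define Y where "Y = (\<lambda>(b, p). b \<otimes> inv p) ` (B \<times> Pall)"
    have fY: "finite Y" unfolding Y_def using fB fPall by simp
    define Bad where "Bad = f -` Y \<inter> I"
    have inj: "inj_on f I" using If(2) bij_betw_def by blast
    have fBad: "finite Bad" unfolding Bad_def by (rule finite_vimage_IntI[OF fY inj])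
    have good: "\<forall>p\<in>Pall. f i \<otimes> p \<notin> B" if "i \<in> I" "i \<notin> Bad" for i
    proof (intro ballI notI)
      fix p assume p: "p \<in> Pall" "f i \<otimes> p \<in> B"
      have pG: "p \<in> carrier G" using p fPall by blast
      have fi: "f i \<in> carrier G" using fV[OF that(1)] unfolding V_def .
      have "f i = (f i \<otimes> p) \<otimes> inv p" using fi pG by (simp add: m_assoc)
      then have "f i \<in> Y" unfolding Y_def using p by force
      then show False using that unfolding Bad_def by blast
    qed
    have edge: "R\<^sup>*\<^sup>* (f i) (f (i + 1))" if i: "i \<in> I" "i + 1 \<in> I" "i \<notin> Bad" "i + 1 \<notin> Bad" for i
    proof -
      obtain g h s where ghs: "{f i, f (i + 1)} = {g, h}" "g \<in> carrier G" "h \<in> carrier G" "s \<in> S0"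
        "h = g \<otimes> s \<or> h = g \<otimes> inv s" using If(3)[OF i(1,2)] unfolding cay_edges_def by blast
      obtain t where t: "t \<in> D" "h = g \<otimes> t" using ghs(4,5) unfolding D_def by blast
      have "g = f i \<or> g = f (i + 1)" using ghs(1) by (metis doubleton_eq_iff)
      then have "\<forall>p\<in>Pall. g \<otimes> p \<notin> B" using good i by blast
      then have "\<forall>p\<in>PP t. g \<otimes> p \<notin> B" unfolding Pall_def using t(1) by blast
      then have "L.conn (carrier G - B) g h" using PP[OF t(1)] ghs(2) t(2) by blast
      then have "R\<^sup>*\<^sup>* g h" using Rc unfolding V_def by blast
      then show ?thesis using ghs(1) Rs by (metis doubleton_eq_iff)
    qed
    obtain N where N: "\<forall>i\<in>Bad. \<bar>i\<bar> < N" using int_bound[OF fBad] by blast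
    have notbad: "k \<notin> Bad" if "N \<le> \<bar>k\<bar>" for k
    proof
      assume "k \<in> Bad"
      then have "\<bar>k\<bar> < N" using N by blast
      then show False using that by linarith
    qed
    have intv: "y \<in> I" if "x \<in> I" "z \<in> I" "x \<le> y" "y \<le> z" for x y z
      using If(1) that unfolding int_interval_def by blast
    have up: "j \<in> I \<longrightarrow> R\<^sup>*\<^sup>* (f i) (f j)" if "N \<le> i" "i \<le> j" "i \<in> I" for i j
      using that(2)
    proof (induction j rule: int_ge_induct)
      case base then show ?case by simp
    next
      case (step j)
      show ?case
      proof
        assume j1: "j + 1 \<in> I"
        have jI: "j \<in> I" using intv[OF that(3) j1, of j] step(1) by simp
        have "N \<le> \<bar>j\<bar>" "N \<le> \<bar>j + 1\<bar>" using that(1) step(1) by linarith+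
        then have "j \<notin> Bad" "j + 1 \<notin> Bad" using notbad by blast+
        then have "R\<^sup>*\<^sup>* (f j) (f (j + 1))" using edge jI j1 by blast
        then show "R\<^sup>*\<^sup>* (f i) (f (j + 1))" using step(2) jI by (meson rtranclp_trans)
      qed
    qed
    have down: "j \<in> I \<longrightarrow> R\<^sup>*\<^sup>* (f i) (f j)" if "i \<le> - N" "j \<le> i" "i \<in> I" for i j
      using that(2)
    proof (induction j rule: int_le_induct)
      case base then show ?case by simp
    next
      case (step j)
      show ?case
      proof
        assume j1: "j - 1 \<in> I"
        have jI: "j \<in> I" using intv[OF j1 that(3), of j] step(1) by simp
        have "N \<le> \<bar>j\<bar>" "N \<le> \<bar>j - 1\<bar>" using that(1) step(1) by linarith+
        then have "j \<notin> Bad" "j - 1 \<notin> Bad" using notbad by blast+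
        then have "R\<^sup>*\<^sup>* (f (j - 1)) (f (j - 1 + 1))" using edge[of "j - 1"] jI j1 by simp
        then have "R\<^sup>*\<^sup>* (f j) (f (j - 1))" using Rs by simp
        then show "R\<^sup>*\<^sup>* (f i) (f (j - 1))" using step(2) jI by (meson rtranclp_trans)
      qed
    qed
    define Rcl where "Rcl x = {y. R\<^sup>*\<^sup>* x y}" for x
    have Rcl_eq: "Rcl x = Rcl y" if H: "R\<^sup>*\<^sup>* x y" for x y
      unfolding Rcl_def
    proof (intro equalityI subsetI CollectI)
      fix z assume "z \<in> {z. R\<^sup>*\<^sup>* x z}"
      then show "R\<^sup>*\<^sup>* y z" using rtranclp_trans[OF Rs[OF H]] by simp
    next
      fix z assume "z \<in> {z. R\<^sup>*\<^sup>* y z}"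
      then show "R\<^sup>*\<^sup>* x z" using rtranclp_trans[OF H] by simp
    qed
    have RclV: "x \<in> V \<Longrightarrow> Rcl x \<subseteq> V" for x
    proof
      fix y assume "x \<in> V" "y \<in> Rcl x"
      then have "R\<^sup>*\<^sup>* x y" unfolding Rcl_def by simp
      then show "y \<in> V" using \<open>x \<in> V\<close> by (induction rule: rtranclp_induct) (use RsV in auto)
    qed
    define ip where "ip = (SOME i. i \<in> I \<and> N \<le> i)"
    define im where "im = (SOME i. i \<in> I \<and> i \<le> - N)"
    define C where "C = {X \<in> components V (E - A). infinite X}"
    have Csub: "C \<subseteq> {Rcl (f ip), Rcl (f im)}"
    proof
      fix X assume "X \<in> C"
      then obtain x where x: "x \<in> V" "X = Rcl x" "infinite X"
        unfolding C_def components_def Rcl_def R_def by blast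
      define Fin where "Fin = f ` {i \<in> I. - N < i \<and> i < N}"
      have "finite Fin" unfolding Fin_def
        by (rule finite_imageI, rule finite_subset[of _ "{- N<..<N}"]) auto
      then obtain y where y: "y \<in> X" "y \<notin> Fin" using x(3) by (meson finite_subset subsetI)
      have yV: "y \<in> V" using y(1) x RclV by blast
      then obtain i where i: "i \<in> I" "y = f i" using If(2) by (metis bij_betw_def imageE)
      have ni: "N \<le> i \<or> i \<le> - N" using y(2) i unfolding Fin_def by force
      have Xy: "X = Rcl (f i)" using y(1) i(2) x(2) Rcl_eq unfolding Rcl_def by blast
      from ni show "X \<in> {Rcl (f ip), Rcl (f im)}"
      proof
        assume Ni: "N \<le> i"
        then have "\<exists>i. i \<in> I \<and> N \<le> i" using i by blast
        then have ipI: "ip \<in> I" "N \<le> ip" unfolding ip_def by (metis (mono_tags, lifting) someI_ex)+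
        have "R\<^sup>*\<^sup>* (f ip) (f i)"
        proof (cases "ip \<le> i")
          case True then show ?thesis using up[OF ipI(2) True ipI(1)] i(1) by blast
        next
          case False then show ?thesis using up[OF Ni _ i(1), of ip] ipI(1) Rs by force
        qed
        then show ?thesis using Xy Rcl_eq by auto
      next
        assume Ni: "i \<le> - N"
        then have "\<exists>i. i \<in> I \<and> i \<le> - N" using i by blast
        then have imI: "im \<in> I" "im \<le> - N" unfolding im_def by (metis (mono_tags, lifting) someI_ex)+
        have "R\<^sup>*\<^sup>* (f im) (f i)"
        proof (cases "i \<le> im")
          case True then show ?thesis using down[OF imI(2) True imI(1)] i(1) by blast
        next
          case False then show ?thesis using down[OF Ni _ i(1), of im] imI(1) Rs by force
        qed
        then show ?thesis using Xy Rcl_eq by auto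
      qed
    qed
    have "finite C" using Csub finite_subset by blast
    moreover have "card C \<le> 2"
    proof -
      have "card C \<le> card {Rcl (f ip), Rcl (f im)}" using card_mono[OF _ Csub] by simp
      also have "\<dots> \<le> 2" by (simp add: card_insert_le_m1)
      finally show ?thesis .
    qed
    ultimately show "let C = {X \<in> components V (cay_edges G S - A). infinite X} in finite C \<and> card C \<le> 2"
      unfolding C_def E_def Let_def by blast
  qed
  then show ?thesis unfolding graph_finitely_many_ends_def V_def by blast
qed

end

theorem corollary4p6:
  fixes G :: "('a, 'b) monoid_scheme"
  assumes "group G" and "finitely_generated G"
  shows "group_finitely_many_ends G \<longleftrightarrow> (\<exists>S. fin_gen_set G S \<and> cayley_ham_path G S)"
proof
  assume e: "group_finitely_many_ends G"
  obtain S where S: "fin_gen_set G S" using assms(2) unfolding finitely_generated_def by blast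
  have "cay G S" using assms(1) S unfolding cay_def cay_axioms_def fin_gen_set_def by blast
  then interpret C: cay G S .
  have "graph_finitely_many_ends (carrier G) (cay_edges G S)" using e S unfolding group_finitely_many_ends_def by blast
  then show "\<exists>S. fin_gen_set G S \<and> cayley_ham_path G S" using C.ham_exists C.bound by blast
next
  assume "\<exists>S. fin_gen_set G S \<and> cayley_ham_path G S"
  then obtain S0 where S0: "fin_gen_set G S0" "cayley_ham_path G S0" by blast
  show "group_finitely_many_ends G" unfolding group_finitely_many_ends_def
  proof (intro allI impI)
    fix S assume S: "fin_gen_set G S"
    have "cay G S" using assms(1) S unfolding cay_def cay_axioms_def fin_gen_set_def by blast
    then interpret C: cay G S .
    show "graph_finitely_many_ends (carrier G) (cay_edges G S)" using C.ham_to_ends[OF S0] .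
  qed
qed


end
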